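(* Let $F\leq F'\leq\hat F$ be permutation groups on $\Omega$. The following are equivalent: (i) $G(F,F')^+$ has index two in $G(F,F')$, i.e. $G(F,F')^+=G(F,F')^\star$; (ii) $G(F,F')^+$ has finite index in $G(F,F')$; (iii) $F$ is transitive on $\Omega$ and $F'$ is generated by its point stabilizers.
   Context: Standing notation. $\Omega$ is a finite set with $d=|\Omega|\geq 3$, $\mathcal{T}_d$ is the $d$-regular tree with vertex set $V$ and set $E$ of non-oriented edges. Fix a coloring $c:E\to\Omega$ such that for every vertex $v$ its restriction $c_v$ to the set $E(v)$ of edges containing $v$ is a bijection onto $\Omega$. For $g\in\mathrm{Aut}(\mathcal{T}_d)$ and $v\in V$, the local permutation is $\sigma(g,v)=c_{gv}\circ g_v\circ c_v^{-1}\in\mathrm{Sym}(\Omega)$, where $g_v:E(v)\to E(gv)$ is induced by $g$. For $F\leq\mathrm{Sym}(\Omega)$: $U(F)=\{g:\sigma(g,v)\in F \ \forall v\}$; $G(F)=\{g:\sigma(g,v)\in F \text{ for all but finitely many } v\}$; $\hat F$ is the subgroup of permutations preserving each $F$-orbit. For $F\leq F'\leq\hat F$, $G(F,F')=G(F)\cap U(F')$. For a group $G$ acting on a tree, $G^\star$ is the subgroup preserving the natural bipartition of the vertex set (vertices at even distance in the same class), and $G^+$ is the subgroup generated by the pointwise stabilizers $G_e$ of all edges $e$. *)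

theory Defs
  imports "HOL-Algebra.Algebra"
begin

text \<open>Colors: a finite type 'a (this is Omega, d = CARD('a)).
  Vertices of T_d: reduced words over 'a (no two consecutive letters equal).
  The edge between w and w@[a] has color a. Every vertex v has exactly one
  incident edge of each color, so this coloring is legal.\<close>

definition TV :: "'a list set" where
  "TV = {w. successively (\<noteq>) w}"

definition tadj :: "'a list \<Rightarrow> 'a list \<Rightarrow> bool" where
  "tadj u w \<longleftrightarrow> u \<in> TV \<and> w \<in> TV \<and> ((\<exists>a. w = u @ [a]) \<or> (\<exists>a. u = w @ [a]))"

definition nbr :: "'a list \<Rightarrow> 'a \<Rightarrow> 'a list" where
  "nbr v a = (if v \<noteq> [] \<and> last v = a then butlast v else v @ [a])"

definition ecol :: "'a list \<Rightarrow> 'a list \<Rightarrow> 'a" where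
  "ecol u w = (if length u < length w then last w else last u)"

definition TAut :: "('a list \<Rightarrow> 'a list) set" where
  "TAut = {g \<in> Bij TV. \<forall>u\<in>TV. \<forall>w\<in>TV. tadj (g u) (g w) \<longleftrightarrow> tadj u w}"

definition AutGroup_T :: "('a list \<Rightarrow> 'a list) monoid" where
  "AutGroup_T = (BijGroup TV) \<lparr>carrier := TAut\<rparr>"

text \<open>Local permutation sigma(g,v) = c_{gv} o g_v o c_v^{-1}.\<close>
definition locperm :: "('a list \<Rightarrow> 'a list) \<Rightarrow> 'a list \<Rightarrow> ('a \<Rightarrow> 'a)" where
  "locperm g v = (\<lambda>a. ecol (g v) (g (nbr v a)))"

definition U_grp :: "('a \<Rightarrow> 'a) set \<Rightarrow> ('a list \<Rightarrow> 'a list) set" where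
  "U_grp F = {g \<in> TAut. \<forall>v\<in>TV. locperm g v \<in> F}"

definition G_grp :: "('a \<Rightarrow> 'a) set \<Rightarrow> ('a list \<Rightarrow> 'a list) set" where
  "G_grp F = {g \<in> TAut. finite {v \<in> TV. locperm g v \<notin> F}}"

definition GFF :: "('a \<Rightarrow> 'a) set \<Rightarrow> ('a \<Rightarrow> 'a) set \<Rightarrow> ('a list \<Rightarrow> 'a list) set" where
  "GFF F F' = G_grp F \<inter> U_grp F'"

definition GFF_group :: "('a \<Rightarrow> 'a) set \<Rightarrow> ('a \<Rightarrow> 'a) set \<Rightarrow> ('a list \<Rightarrow> 'a list) monoid" where
  "GFF_group F F' = AutGroup_T \<lparr>carrier := GFF F F'\<rparr>"

definition plus_sub :: "('a list \<Rightarrow> 'a list) set \<Rightarrow> ('a list \<Rightarrow> 'a list) set" where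
  "plus_sub H = generate AutGroup_T
     (\<Union>{{g \<in> H. g u = u \<and> g w = w} | u w. tadj u w})"

text \<open>G^* : preserving the bipartition (class of v = parity of its distance
  to the root [], i.e. parity of length v).\<close>
definition star_sub :: "('a list \<Rightarrow> 'a list) set \<Rightarrow> ('a list \<Rightarrow> 'a list) set" where
  "star_sub H = {g \<in> H. \<forall>v\<in>TV. even (length (g v)) \<longleftrightarrow> even (length v)}"

abbreviation SymOmega :: "('a \<Rightarrow> 'a) monoid" where
  "SymOmega \<equiv> BijGroup (UNIV :: 'a set)"

definition orbit_of :: "('a \<Rightarrow> 'a) set \<Rightarrow> 'a \<Rightarrow> 'a set" where
  "orbit_of F x = (\<lambda>f. f x) ` F"

definition hat :: "('a \<Rightarrow> 'a) set \<Rightarrow> ('a \<Rightarrow> 'a) set" where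
  "hat F = {s \<in> carrier SymOmega. \<forall>x. s ` orbit_of F x = orbit_of F x}"

definition transitive_on_Omega :: "('a \<Rightarrow> 'a) set \<Rightarrow> bool" where
  "transitive_on_Omega F \<longleftrightarrow> (\<forall>x y. \<exists>f\<in>F. f x = y)"

definition gen_by_point_stabilizers :: "('a \<Rightarrow> 'a) set \<Rightarrow> bool" where
  "gen_by_point_stabilizers F \<longleftrightarrow> F = generate SymOmega (\<Union>x. {f \<in> F. f x = x})"

end

theory Submission
  imports Defs
begin


lemma TV_iff: "v \<in> TV \<longleftrightarrow> successively (\<noteq>) v"
  by (simp add: TV_def)

lemma TV_snoc: "v @ [c] \<in> TV \<longleftrightarrow> v \<in> TV \<and> (v = [] \<or> last v \<noteq> c)"
  by (auto simp: TV_iff successively_append_iff)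

lemma TV_butlast: "v \<in> TV \<Longrightarrow> butlast v \<in> TV"
  by (metis TV_snoc append_butlast_last_id butlast.simps(1))

lemma nbr_TV: "v \<in> TV \<Longrightarrow> nbr v a \<in> TV"
  by (auto simp: nbr_def TV_butlast TV_snoc)

lemma nbr_snoc: "nbr (w @ [a]) a = w"
  unfolding nbr_def by simp

lemma nbr_app: assumes "v = [] \<or> last v \<noteq> a" shows "nbr v a = v @ [a]"
proof -
  have "\<not> (v \<noteq> [] \<and> last v = a)" using assms by blast
  thus ?thesis unfolding nbr_def by (rule if_not_P)
qed

lemma nbr_nbr: assumes "v \<in> TV" shows "nbr (nbr v a) a = v"
proof (cases "v \<noteq> [] \<and> last v = a")
  case True
  then obtain w where w: "v = w @ [a]" using append_butlast_last_id by metis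
  have "w @ [a] \<in> TV" using assms w by simp
  hence "w = [] \<or> last w \<noteq> a" by (simp add: TV_snoc)
  hence 1: "nbr w a = w @ [a]" by (rule nbr_app)
  have "nbr v a = w" using w nbr_snoc by simp
  thus ?thesis using 1 w by simp
next
  case False
  hence "v = [] \<or> last v \<noteq> a" by metis
  hence "nbr v a = v @ [a]" by (rule nbr_app)
  thus ?thesis using nbr_snoc by simp
qed

lemma ecol_nbr: "ecol v (nbr v a) = a"
proof (cases "v \<noteq> [] \<and> last v = a")
  case True
  hence "nbr v a = butlast v" unfolding nbr_def by simp
  moreover have "\<not> length v < length (butlast v)" by simp
  ultimately show ?thesis using True unfolding ecol_def by presburger
next
  case False
  hence "nbr v a = v @ [a]" unfolding nbr_def by auto
  thus ?thesis unfolding ecol_def by simp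
qed

lemma tadj_nbr: "tadj u w \<longleftrightarrow> u \<in> TV \<and> w \<in> TV \<and> (\<exists>a. w = nbr u a)"
proof
  assume "tadj u w"
  hence u: "u \<in> TV" and w: "w \<in> TV" and c: "(\<exists>a. w = u @ [a]) \<or> (\<exists>a. u = w @ [a])"
    unfolding tadj_def by simp_all
  from c have "\<exists>a. w = nbr u a"
  proof
    assume "\<exists>a. w = u @ [a]"
    then obtain a where a: "w = u @ [a]" by (elim exE)
    have "u @ [a] \<in> TV" using w a by simp
    hence "u = [] \<or> last u \<noteq> a" by (simp add: TV_snoc)
    hence "nbr u a = u @ [a]" by (rule nbr_app)
    thus ?thesis using a by metis
  next
    assume "\<exists>a. u = w @ [a]"
    then obtain a where a: "u = w @ [a]" by (elim exE)
    hence "nbr u a = w" using nbr_snoc by simp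
    thus ?thesis by metis
  qed
  thus "u \<in> TV \<and> w \<in> TV \<and> (\<exists>a. w = nbr u a)" using u w by simp
next
  assume "u \<in> TV \<and> w \<in> TV \<and> (\<exists>a. w = nbr u a)"
  then obtain a where u: "u \<in> TV" and w: "w \<in> TV" and a: "w = nbr u a" by (elim conjE exE)
  show "tadj u w"
  proof (cases "u \<noteq> [] \<and> last u = a")
    case True
    hence "nbr u a = butlast u" unfolding nbr_def by (rule if_P)
    hence "u = w @ [a]" using True a append_butlast_last_id by metis
    thus ?thesis using u w unfolding tadj_def by simp
  next
    case False
    hence "u = [] \<or> last u \<noteq> a" by metis
    hence "w = u @ [a]" using a nbr_app by metis
    thus ?thesis using u w unfolding tadj_def by simp
  qed
qed

lemma tadj_nbrI: "v \<in> TV \<Longrightarrow> tadj v (nbr v a)"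
  unfolding tadj_nbr using nbr_TV by metis

lemma nbr_ecol: "tadj u w \<Longrightarrow> nbr u (ecol u w) = w"
  unfolding tadj_nbr using ecol_nbr by metis

lemma ecol_sym: "tadj u w \<Longrightarrow> ecol u w = ecol w u"
  by (metis ecol_nbr nbr_nbr tadj_nbr)

lemma nbr_inj: "nbr v a = nbr v b \<Longrightarrow> a = b"
  by (metis ecol_nbr)

lemma parity_nbr: "even (length (nbr v a)) \<longleftrightarrow> \<not> even (length v)"
  by (cases v) (auto simp: nbr_def)

lemma TV_Nil: "[] \<in> TV" by (simp add: TV_iff)

lemma TV_connect:
  assumes "u \<in> TV" "Q u" and step: "\<And>v a. v \<in> TV \<Longrightarrow> Q v \<Longrightarrow> Q (nbr v a)"
    and "v \<in> TV"
  shows "Q v"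
proof -
  have "\<And>u. length u = n \<Longrightarrow> u \<in> TV \<Longrightarrow> Q u \<Longrightarrow> Q []" for n
  proof (induction n)
    case 0 thus ?case by simp
  next
    case (Suc n)
    hence ne: "u \<noteq> []" by auto
    have "butlast u = nbr u (last u)" using ne by (simp add: nbr_def)
    hence "Q (butlast u)" using step Suc by metis
    moreover have "length (butlast u) = n" using Suc.prems by simp
    ultimately show ?case using Suc.IH Suc.prems(2) TV_butlast by metis
  qed
  hence Q0: "Q []" using assms by blast
  show ?thesis using \<open>v \<in> TV\<close>
  proof (induction v rule: rev_induct)
    case Nil thus ?case using Q0 by simp
  next
    case (snoc c v)
    hence v: "v \<in> TV" and l: "v = [] \<or> last v \<noteq> c" by (simp_all add: TV_snoc)
    from l have "v @ [c] = nbr v c" using nbr_app by metis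
    thus ?case using snoc step v by metis
  qed
qed



lemma TAut_Bij: "g \<in> TAut \<Longrightarrow> g \<in> Bij TV"
  unfolding TAut_def by simp

lemma TAut_bij_betw: "g \<in> TAut \<Longrightarrow> bij_betw g TV TV"
  unfolding TAut_def Bij_def by simp

lemma TAut_TV: "g \<in> TAut \<Longrightarrow> v \<in> TV \<Longrightarrow> g v \<in> TV"
  using TAut_bij_betw bij_betwE by metis

lemma TAut_inj: "g \<in> TAut \<Longrightarrow> inj_on g TV"
  using TAut_bij_betw bij_betw_def by metis

lemma TAut_tadj: "g \<in> TAut \<Longrightarrow> u \<in> TV \<Longrightarrow> w \<in> TV \<Longrightarrow> tadj (g u) (g w) \<longleftrightarrow> tadj u w"
  unfolding TAut_def by simp

lemma TAut_nbr: assumes "g \<in> TAut" "v \<in> TV" shows "g (nbr v a) = nbr (g v) (locperm g v a)"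
proof -
  have "tadj (g v) (g (nbr v a))" using assms TAut_tadj tadj_nbrI nbr_TV by metis
  thus ?thesis unfolding locperm_def using nbr_ecol by metis
qed

lemma locperm_inj: assumes "g \<in> TAut" "v \<in> TV" shows "inj (locperm g v)"
proof (rule injI)
  fix a b assume "locperm g v a = locperm g v b"
  hence "g (nbr v a) = g (nbr v b)" using TAut_nbr[OF assms] by metis
  hence "nbr v a = nbr v b" using TAut_inj[OF assms(1)] nbr_TV[OF assms(2)] inj_onD by metis
  thus "a = b" by (rule nbr_inj)
qed

lemma locperm_bij: assumes "g \<in> TAut" "v \<in> TV" shows "bij (locperm g v :: 'a::finite \<Rightarrow> 'a)"
  using locperm_inj[OF assms] by (simp add: bij_def finite_UNIV_inj_surj)

lemma SymOmega_carrier: "f \<in> carrier (BijGroup (UNIV :: 'a set)) \<longleftrightarrow> bij f"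
  unfolding BijGroup_def Bij_def by simp

lemma SymOmega_mult: "bij f \<Longrightarrow> bij g \<Longrightarrow> monoid.mult (BijGroup (UNIV :: 'a set)) f g = f \<circ> g"
  unfolding BijGroup_def Bij_def compose_def by (auto simp: fun_eq_iff)

lemma SymOmega_one: "monoid.one (BijGroup (UNIV :: 'a set)) = id"
  unfolding BijGroup_def by (auto simp: fun_eq_iff)

lemma SymOmega_inv: "bij f \<Longrightarrow> inv\<^bsub>BijGroup (UNIV :: 'a set)\<^esub> f = inv_into UNIV f"
  using inv_BijGroup[of f "UNIV :: 'a set"] unfolding Bij_def by (simp add: fun_eq_iff)

lemma locperm_compose:
  assumes g: "g \<in> TAut" and h: "h \<in> TAut" and v: "v \<in> TV"
  shows "locperm (compose TV g h) v = locperm g (h v) \<circ> locperm h v"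
proof
  fix a
  have "compose TV g h v = g (h v)" using v by (simp add: compose_def)
  moreover have "compose TV g h (nbr v a) = g (h (nbr v a))" using nbr_TV[OF v] by (simp add: compose_def)
  moreover have "h (nbr v a) = nbr (h v) (locperm h v a)" using TAut_nbr[OF h v] .
  ultimately show "locperm (compose TV g h) v a = (locperm g (h v) \<circ> locperm h v) a"
    unfolding locperm_def by simp
qed

lemma locperm_idTV: "v \<in> TV \<Longrightarrow> locperm (\<lambda>x\<in>TV. x) v = id"
proof
  fix a assume "v \<in> TV"
  hence "nbr v a \<in> TV" by (rule nbr_TV)
  thus "locperm (\<lambda>x\<in>TV. x) v a = id a" unfolding locperm_def using \<open>v \<in> TV\<close> ecol_nbr by simp
qed

lemma compose_TAut: fixes g h :: "'a list \<Rightarrow> 'a list" assumes "g \<in> TAut" "h \<in> TAut" shows "compose TV g h \<in> TAut"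
  unfolding TAut_def
proof (intro CollectI conjI ballI)
  show "compose TV g h \<in> Bij TV" using assms TAut_Bij compose_Bij by metis
  fix u w :: "'a list" assume u: "u \<in> TV" and w: "w \<in> TV"
  have "compose TV g h u = g (h u)" "compose TV g h w = g (h w)" using u w by (simp_all add: compose_def)
  moreover have "h u \<in> TV" "h w \<in> TV" using u w assms TAut_TV by metis+
  ultimately show "tadj (compose TV g h u) (compose TV g h w) = tadj u w"
    using assms TAut_tadj u w by metis
qed

lemma id_TAut: "(\<lambda>x\<in>TV. x) \<in> TAut"
  unfolding TAut_def using id_Bij by auto

abbreviation tinv :: "('a list \<Rightarrow> 'a list) \<Rightarrow> ('a list \<Rightarrow> 'a list)" where
  "tinv g \<equiv> restrict (inv_into TV g) TV"

lemma tinv_TV: "g \<in> TAut \<Longrightarrow> v \<in> TV \<Longrightarrow> tinv g v \<in> TV"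
  using TAut_Bij Bij_inv_into_mem by fastforce

lemma tinv_right: "g \<in> TAut \<Longrightarrow> v \<in> TV \<Longrightarrow> g (tinv g v) = v"
  using TAut_bij_betw[of g] by (simp add: bij_betw_def f_inv_into_f)

lemma tinv_left: "g \<in> TAut \<Longrightarrow> v \<in> TV \<Longrightarrow> tinv g (g v) = v"
  using TAut_bij_betw[of g] TAut_TV[of g v] by (simp add: bij_betw_def inv_into_f_f)

lemma tinv_TAut: fixes g :: "'a list \<Rightarrow> 'a list" assumes "g \<in> TAut" shows "tinv g \<in> TAut"
  unfolding TAut_def
proof (intro CollectI conjI ballI)
  show "tinv g \<in> Bij TV" using assms TAut_Bij restrict_inv_into_Bij by metis
  fix u w :: "'a list" assume u: "u \<in> TV" and w: "w \<in> TV"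
  have "tadj (g (tinv g u)) (g (tinv g w)) = tadj (tinv g u) (tinv g w)"
    using TAut_tadj[OF assms] tinv_TV[OF assms] u w by metis
  thus "tadj (tinv g u) (tinv g w) = tadj u w" using tinv_right[OF assms] u w by simp
qed

lemma compose_tinv: assumes "g \<in> TAut" shows "compose TV g (tinv g) = (\<lambda>x\<in>TV. x)"
  using tinv_right[OF assms] by (auto simp: compose_def fun_eq_iff)

lemma locperm_tinv: fixes g :: "'a::finite list \<Rightarrow> 'a list" assumes g: "g \<in> TAut" and v: "v \<in> TV"
  shows "locperm (tinv g) v = inv_into UNIV (locperm g (tinv g v))"
proof -
  have "locperm g (tinv g v) \<circ> locperm (tinv g) v = id"
    using locperm_compose[OF g tinv_TAut[OF g] v] compose_tinv[OF g] locperm_idTV[OF v] by simp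
  moreover have "bij (locperm g (tinv g v))" using locperm_bij g tinv_TV v by metis
  ultimately show ?thesis
  proof (intro ext)
    fix x
    assume fk: "locperm g (tinv g v) \<circ> locperm (tinv g) v = id" and b: "bij (locperm g (tinv g v))"
    have "locperm (tinv g) v x = inv_into UNIV (locperm g (tinv g v)) (locperm g (tinv g v) (locperm (tinv g) v x))"
      using b by (simp add: bij_is_inj inv_into_f_f)
    also have "\<dots> = inv_into UNIV (locperm g (tinv g v)) x" using fk by (simp add: fun_eq_iff)
    finally show "locperm (tinv g) v x = inv_into UNIV (locperm g (tinv g v)) x" .
  qed
qed

lemma TAut_subgroup: "subgroup (TAut :: ('a list \<Rightarrow> 'a list) set) (BijGroup TV)"
proof (rule group.subgroupI[OF group_BijGroup])
  show "TAut \<subseteq> carrier (BijGroup TV)" unfolding BijGroup_def TAut_def by auto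
  show "TAut \<noteq> {}" using id_TAut by blast
  fix g h :: "'a list \<Rightarrow> 'a list" assume g: "g \<in> TAut" and h: "h \<in> TAut"
  show "inv\<^bsub>BijGroup TV\<^esub> g \<in> TAut" using inv_BijGroup TAut_Bij tinv_TAut g by metis
  have "g \<otimes>\<^bsub>BijGroup TV\<^esub> h = compose TV g h" using TAut_Bij[OF g] TAut_Bij[OF h]
    unfolding BijGroup_def by simp
  thus "g \<otimes>\<^bsub>BijGroup TV\<^esub> h \<in> TAut" using g h compose_TAut by simp
qed

lemma group_Aut: "group AutGroup_T"
  unfolding AutGroup_T_def using group.subgroup_imp_group[OF group_BijGroup TAut_subgroup] .

lemma Aut_carrier: "carrier AutGroup_T = TAut"
  unfolding AutGroup_T_def by simp

lemma Aut_mult: "g \<in> TAut \<Longrightarrow> h \<in> TAut \<Longrightarrow> g \<otimes>\<^bsub>AutGroup_T\<^esub> h = compose TV g h"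
  unfolding AutGroup_T_def BijGroup_def using TAut_Bij[of g] TAut_Bij[of h] by simp

lemma Aut_one: "\<one>\<^bsub>AutGroup_T\<^esub> = (\<lambda>x\<in>TV. x)"
  unfolding AutGroup_T_def BijGroup_def by simp

lemma Aut_inv: "g \<in> TAut \<Longrightarrow> inv\<^bsub>AutGroup_T\<^esub> g = tinv g"
  unfolding AutGroup_T_def
  using group.m_inv_consistent[OF group_BijGroup TAut_subgroup] inv_BijGroup TAut_Bij by metis



lemma sub_bij: "subgroup F (BijGroup (UNIV::'a set)) \<Longrightarrow> f \<in> F \<Longrightarrow> bij f"
  using subgroup.subset SymOmega_carrier by blast

lemma sub_comp: assumes "subgroup F (BijGroup (UNIV::'a set))" "f \<in> F" "g \<in> F" shows "f \<circ> g \<in> F"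
proof -
  have "monoid.mult (BijGroup (UNIV::'a set)) f g \<in> F" using subgroup.m_closed[OF assms(1)] assms(2,3) by blast
  thus ?thesis using SymOmega_mult sub_bij assms by metis
qed

lemma sub_inv: assumes "subgroup F (BijGroup (UNIV::'a set))" "f \<in> F" shows "inv_into UNIV f \<in> F"
proof -
  have "inv\<^bsub>BijGroup (UNIV::'a set)\<^esub> f \<in> F" using subgroup.m_inv_closed[OF assms(1)] assms(2) by blast
  thus ?thesis using SymOmega_inv sub_bij assms by metis
qed

lemma sub_id: assumes "subgroup F (BijGroup (UNIV::'a set))" shows "id \<in> F"
  using subgroup.one_closed[OF assms] SymOmega_one by metis

lemma GFF_iff: "g \<in> GFF F F' \<longleftrightarrow> g \<in> TAut \<and> (\<forall>v\<in>TV. locperm g v \<in> F') \<and> finite {v \<in> TV. locperm g v \<notin> F}"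
  unfolding GFF_def G_grp_def U_grp_def by auto

lemma GFF_subgroup:
  fixes F F' :: "('a::finite \<Rightarrow> 'a) set"
  assumes sF: "subgroup F (BijGroup UNIV)" and sF': "subgroup F' (BijGroup UNIV)"
  shows "subgroup (GFF F F') AutGroup_T"
proof (rule group.subgroupI[OF group_Aut])
  show "GFF F F' \<subseteq> carrier AutGroup_T" using Aut_carrier GFF_iff by blast
  have l: "locperm (\<lambda>x\<in>TV. x) v = id" if "v \<in> TV" for v :: "'a list" using that by (rule locperm_idTV)
  have e: "{v \<in> TV. locperm (\<lambda>x\<in>TV. x) v \<notin> F} = {}" using l sub_id[OF sF] by auto
  have "\<forall>v\<in>TV. locperm (\<lambda>x\<in>TV. x) v \<in> F'" using l sub_id[OF sF'] by auto
  moreover have "finite {v \<in> TV. locperm (\<lambda>x\<in>TV. x) v \<notin> F}" by (subst e) (rule finite.emptyI)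
  ultimately have "(\<lambda>x\<in>TV. x) \<in> GFF F F'"
    unfolding GFF_iff using id_TAut by blast
  thus "GFF F F' \<noteq> {}" by blast
next
  fix g :: "'a list \<Rightarrow> 'a list" assume g: "g \<in> GFF F F'"
  hence gT: "g \<in> TAut" and g1: "\<forall>v\<in>TV. locperm g v \<in> F'" and g2: "finite {v \<in> TV. locperm g v \<notin> F}"
    using GFF_iff by blast+
  have "inv\<^bsub>AutGroup_T\<^esub> g = tinv g" using Aut_inv gT by blast
  moreover have "tinv g \<in> GFF F F'"
    unfolding GFF_iff
  proof (intro conjI ballI)
    show "tinv g \<in> TAut" using tinv_TAut gT by blast
    fix v :: "'a list" assume v: "v \<in> TV"
    show "locperm (tinv g) v \<in> F'" using locperm_tinv[OF gT v] g1 tinv_TV[OF gT v] sub_inv[OF sF'] by simp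
  next
    have "{v \<in> TV. locperm (tinv g) v \<notin> F} \<subseteq> g ` {v \<in> TV. locperm g v \<notin> F}"
    proof
      fix v :: "'a list" assume "v \<in> {v \<in> TV. locperm (tinv g) v \<notin> F}"
      hence v: "v \<in> TV" and n: "locperm (tinv g) v \<notin> F" by auto
      have "locperm g (tinv g v) \<notin> F" using n locperm_tinv[OF gT v] sub_inv[OF sF] by metis
      moreover have "g (tinv g v) = v" using tinv_right gT v by blast
      ultimately show "v \<in> g ` {v \<in> TV. locperm g v \<notin> F}" using tinv_TV[OF gT v] by force
    qed
    thus "finite {v \<in> TV. locperm (tinv g) v \<notin> F}" using g2 finite_subset by blast
  qed
  ultimately show "inv\<^bsub>AutGroup_T\<^esub> g \<in> GFF F F'" by simp
next
  fix g h :: "'a list \<Rightarrow> 'a list" assume g: "g \<in> GFF F F'" and h: "h \<in> GFF F F'"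
  hence gT: "g \<in> TAut" and g1: "\<forall>v\<in>TV. locperm g v \<in> F'" and g2: "finite {v \<in> TV. locperm g v \<notin> F}"
    and hT: "h \<in> TAut" and h1: "\<forall>v\<in>TV. locperm h v \<in> F'" and h2: "finite {v \<in> TV. locperm h v \<notin> F}"
    using GFF_iff by blast+
  have "g \<otimes>\<^bsub>AutGroup_T\<^esub> h = compose TV g h" using Aut_mult gT hT by blast
  moreover have "compose TV g h \<in> GFF F F'"
    unfolding GFF_iff
  proof (intro conjI ballI)
    show "compose TV g h \<in> TAut" using compose_TAut gT hT by blast
    fix v :: "'a list" assume v: "v \<in> TV"
    show "locperm (compose TV g h) v \<in> F'"
      using locperm_compose[OF gT hT v] g1 h1 TAut_TV[OF hT v] v sub_comp[OF sF'] by simp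
  next
    have "{v \<in> TV. locperm (compose TV g h) v \<notin> F} \<subseteq> {v \<in> TV. locperm h v \<notin> F} \<union> tinv h ` {v \<in> TV. locperm g v \<notin> F}"
    proof
      fix v :: "'a list" assume "v \<in> {v \<in> TV. locperm (compose TV g h) v \<notin> F}"
      hence v: "v \<in> TV" and n: "locperm (compose TV g h) v \<notin> F" by auto
      show "v \<in> {v \<in> TV. locperm h v \<notin> F} \<union> tinv h ` {v \<in> TV. locperm g v \<notin> F}"
      proof (cases "locperm h v \<in> F")
        case True
        hence "locperm g (h v) \<notin> F" using n locperm_compose[OF gT hT v] sub_comp[OF sF] by metis
        moreover have "tinv h (h v) = v" using tinv_left hT v by blast
        ultimately show ?thesis using TAut_TV[OF hT v] by force
      next
        case False thus ?thesis using v by blast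
      qed
    qed
    thus "finite {v \<in> TV. locperm (compose TV g h) v \<notin> F}" using g2 h2 finite_subset by blast
  qed
  ultimately show "g \<otimes>\<^bsub>AutGroup_T\<^esub> h \<in> GFF F F'" by simp
qed

definition EdgeGen :: "('a list \<Rightarrow> 'a list) set \<Rightarrow> ('a list \<Rightarrow> 'a list) set" where
  "EdgeGen H = \<Union>{{g \<in> H. g u = u \<and> g w = w} | u w. tadj u w}"

lemma plus_sub_EdgeGen: "plus_sub H = generate AutGroup_T (EdgeGen H)"
  unfolding plus_sub_def EdgeGen_def by simp

lemma EdgeGen_iff: "g \<in> EdgeGen H \<longleftrightarrow> g \<in> H \<and> (\<exists>u w. tadj u w \<and> g u = u \<and> g w = w)"
  unfolding EdgeGen_def by blast

lemma plus_subgroup: assumes "H \<subseteq> TAut" shows "subgroup (plus_sub H) AutGroup_T"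
  unfolding plus_sub_EdgeGen
  by (rule group.generate_is_subgroup[OF group_Aut]) (use assms in \<open>auto simp: Aut_carrier EdgeGen_iff\<close>)

lemma plus_sub_sub: assumes "subgroup H AutGroup_T" shows "plus_sub H \<subseteq> H"
  unfolding plus_sub_EdgeGen
  by (rule group.generate_subgroup_incl[OF group_Aut _ assms]) (auto simp: EdgeGen_iff)



definition taur :: "'a \<Rightarrow> 'a list \<Rightarrow> 'a list" where
  "taur c v = (if v \<noteq> [] \<and> hd v = c then tl v else c # v)"

lemma taur_TV: assumes "v \<in> TV" shows "taur c v \<in> TV"
proof (cases v)
  case Nil thus ?thesis by (simp add: taur_def TV_iff)
next
  case (Cons x r)
  show ?thesis
  proof (cases "x = c")
    case True
    thus ?thesis using assms Cons by (cases r) (simp_all add: taur_def TV_iff successively_Cons)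
  next
    case False
    thus ?thesis using assms Cons by (simp add: taur_def TV_iff successively_Cons)
  qed
qed

lemma taur_taur: assumes "v \<in> TV" shows "taur c (taur c v) = v"
proof (cases v)
  case Nil thus ?thesis by (simp add: taur_def)
next
  case (Cons x r)
  show ?thesis
  proof (cases "x = c")
    case True
    have "r = [] \<or> hd r \<noteq> c" using assms Cons True by (cases r) (simp_all add: TV_iff, metis)
    thus ?thesis using Cons True by (cases r) (simp_all add: taur_def)
  next
    case False
    thus ?thesis using Cons by (simp add: taur_def)
  qed
qed

lemma taur_nbr: assumes "v \<in> TV" shows "taur c (nbr v a) = nbr (taur c v) a"
proof (cases v)
  case Nil thus ?thesis by (simp add: taur_def nbr_def)
next
  case (Cons x r)
  show ?thesis
  proof (cases "x = c")
    case xc: True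
    show ?thesis
    proof (cases r)
      case Nil
      thus ?thesis using Cons xc by (simp add: taur_def nbr_def)
    next
      case (Cons y r')
      hence yc: "y \<noteq> c" using assms \<open>v = x # r\<close> xc by (simp add: TV_iff) metis
      show ?thesis using Cons \<open>v = x # r\<close> xc yc
        by (simp add: taur_def nbr_def)
    qed
  next
    case xc: False
    show ?thesis
    proof (cases r)
      case Nil
      thus ?thesis using Cons xc by (simp add: taur_def nbr_def)
    next
      case (Cons y r')
      show ?thesis using Cons \<open>v = x # r\<close> xc
        by (simp add: taur_def nbr_def)
    qed
  qed
qed

definition tau :: "'a \<Rightarrow> 'a list \<Rightarrow> 'a list" where
  "tau c = restrict (taur c) TV"

lemma tau_TV: "v \<in> TV \<Longrightarrow> tau c v = taur c v"
  by (simp add: tau_def)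

lemma tau_TAut: "tau c \<in> TAut"
  unfolding TAut_def
proof (intro CollectI conjI ballI)
  have "bij_betw (taur c) TV TV"
    by (rule bij_betw_byWitness[where f'="taur c"]) (auto simp: taur_taur taur_TV)
  hence "bij_betw (tau c) TV TV" unfolding tau_def using bij_betw_cong[of TV "restrict (taur c) TV" "taur c"] by simp
  thus "tau c \<in> Bij TV" unfolding Bij_def tau_def by simp
  fix u w :: "'a list" assume u: "u \<in> TV" and w: "w \<in> TV"
  show "tadj (tau c u) (tau c w) = tadj u w"
  proof
    assume "tadj u w"
    then obtain a where a: "w = nbr u a" using tadj_nbr by metis
    hence "taur c w = nbr (taur c u) a" using taur_nbr u by metis
    thus "tadj (tau c u) (tau c w)" using u w tau_TV taur_TV tadj_nbr by metis
  next
    assume "tadj (tau c u) (tau c w)"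
    then obtain a where a: "taur c w = nbr (taur c u) a" using tadj_nbr u w tau_TV by metis
    hence "taur c (taur c w) = nbr (taur c (taur c u)) a" using taur_nbr u taur_TV by metis
    hence "w = nbr u a" using taur_taur u w by metis
    thus "tadj u w" using u w tadj_nbr by metis
  qed
qed

lemma tau_locperm: assumes "v \<in> TV" shows "locperm (tau c) v = id"
proof
  fix a
  have "tau c (nbr v a) = nbr (tau c v) a" using tau_TV taur_nbr assms nbr_TV by metis
  thus "locperm (tau c) v a = id a" unfolding locperm_def using ecol_nbr by simp
qed

lemma tau_Nil: "tau c [] = [c]"
  by (simp add: tau_def taur_def TV_Nil)

lemma tau_tau: "v \<in> TV \<Longrightarrow> tau c (tau c v) = v"
  using tau_TV taur_TV taur_taur by metis

lemma tau_GFF: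
  fixes F F' :: "('a::finite \<Rightarrow> 'a) set"
  assumes "id \<in> F" "id \<in> F'"
  shows "tau c \<in> GFF F F'"
proof -
  have e: "{v \<in> TV. locperm (tau c) v \<notin> F} = {}" using assms by (auto simp: tau_locperm)
  have "\<forall>v\<in>TV. locperm (tau c) v \<in> F'" using assms by (auto simp: tau_locperm)
  moreover have "finite {v \<in> TV. locperm (tau c) v \<notin> F}" by (subst e) (rule finite.emptyI)
  moreover have "tau c \<in> TAut" by (rule tau_TAut)
  ultimately show ?thesis unfolding GFF_iff by blast
qed



definition KL :: "('a list \<Rightarrow> 'a \<Rightarrow> 'a) \<Rightarrow> 'a list \<Rightarrow> 'a list" where
  "KL L v = map (\<lambda>i. L (take i v) (v ! i)) [0..<length v]"

lemma KL_Nil: "KL L [] = []" by (simp add: KL_def)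

lemma KL_snoc: "KL L (v @ [c]) = KL L v @ [L v c]"
proof -
  have "KL L (v @ [c]) = map (\<lambda>i. L (take i (v @ [c])) ((v @ [c]) ! i)) [0..<length v] @ [L v c]"
    unfolding KL_def by simp
  also have "map (\<lambda>i. L (take i (v @ [c])) ((v @ [c]) ! i)) [0..<length v] = KL L v"
    unfolding KL_def by (rule map_cong) (auto simp: nth_append)
  finally show ?thesis .
qed

lemma KL_length: "length (KL L v) = length v" by (simp add: KL_def)

locale lab =
  fixes L :: "'a::finite list \<Rightarrow> 'a \<Rightarrow> 'a"
  assumes Lbij: "\<And>v. bij (L v)"
    and Lcomp: "\<And>v c. L (v @ [c]) c = L v c"
begin

lemma Linj: "L v a = L v b \<Longrightarrow> a = b"
  using Lbij bij_is_inj injD by metis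

lemma last_KL: "v \<noteq> [] \<Longrightarrow> last (KL L v) = L v (last v)"
proof -
  assume "v \<noteq> []"
  then obtain w b where v: "v = w @ [b]" by (metis append_butlast_last_id)
  have "last (KL L v) = L w b" using v by (simp add: KL_snoc)
  also have "\<dots> = L v (last v)" using v Lcomp by simp
  finally show ?thesis .
qed

lemma KL_TV: "v \<in> TV \<Longrightarrow> KL L v \<in> TV"
proof (induction v rule: rev_induct)
  case Nil thus ?case by (simp add: KL_Nil TV_Nil)
next
  case (snoc c v)
  hence v: "v \<in> TV" and l: "v = [] \<or> last v \<noteq> c" by (simp_all add: TV_snoc)
  have "KL L v = [] \<or> last (KL L v) \<noteq> L v c"
  proof (cases "v = []")
    case True thus ?thesis by (simp add: KL_Nil)
  next
    case False
    hence "last v \<noteq> c" using l by simp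
    thus ?thesis using last_KL[OF False] Linj by metis
  qed
  thus ?case using snoc.IH[OF v] KL_snoc TV_snoc by metis
qed

lemma KL_inj: "length u = length w \<Longrightarrow> KL L u = KL L w \<Longrightarrow> u = w"
proof (induction u arbitrary: w rule: rev_induct)
  case Nil thus ?case by simp
next
  case (snoc c u)
  then obtain w' d where w: "w = w' @ [d]" by (metis append_butlast_last_id length_0_conv snoc_eq_iff_butlast)
  have "KL L u @ [L u c] = KL L w' @ [L w' d]" using snoc.prems w by (simp add: KL_snoc)
  hence 1: "KL L u = KL L w'" and 2: "L u c = L w' d" by simp_all
  have "length u = length w'" using snoc.prems w by simp
  hence "u = w'" using snoc.IH 1 by blast
  thus ?case using 2 Linj w by metis
qed

lemma KL_surj: "y \<in> TV \<Longrightarrow> \<exists>v\<in>TV. KL L v = y"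
proof (induction y rule: rev_induct)
  case Nil thus ?case using KL_Nil TV_Nil by metis
next
  case (snoc d y)
  hence y: "y \<in> TV" and l: "y = [] \<or> last y \<noteq> d" by (simp_all add: TV_snoc)
  obtain v where v: "v \<in> TV" "KL L v = y" using snoc.IH y by blast
  obtain c where c: "L v c = d" using Lbij bij_pointE by metis
  have "v = [] \<or> last v \<noteq> c"
  proof (cases "v = []")
    case True thus ?thesis by simp
  next
    case False
    hence "last y = L v (last v)" using last_KL v by metis
    hence "y \<noteq> [] \<Longrightarrow> last v \<noteq> c" using l c by metis
    moreover have "y \<noteq> []" using False v KL_length by (metis length_0_conv)
    ultimately show ?thesis by simp
  qed
  hence "v @ [c] \<in> TV" using v by (simp add: TV_snoc)
  moreover have "KL L (v @ [c]) = y @ [d]" using v c by (simp add: KL_snoc)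
  ultimately show ?case by blast
qed

lemma KL_nbr: assumes "v \<in> TV" shows "KL L (nbr v a) = nbr (KL L v) (L v a)"
proof (cases "v \<noteq> [] \<and> last v = a")
  case True
  then obtain w where w: "v = w @ [a]" by (metis append_butlast_last_id)
  have "nbr v a = w" using w by (simp add: nbr_snoc)
  moreover have "KL L v = KL L w @ [L v a]" using w Lcomp by (simp add: KL_snoc)
  ultimately show ?thesis by (simp add: nbr_snoc)
next
  case False
  hence l: "v = [] \<or> last v \<noteq> a" by metis
  hence 1: "nbr v a = v @ [a]" by (rule nbr_app)
  have "KL L v = [] \<or> last (KL L v) \<noteq> L v a"
  proof (cases "v = []")
    case True thus ?thesis by (simp add: KL_Nil)
  next
    case False
    hence "last v \<noteq> a" using l by simp
    thus ?thesis using last_KL[OF False] Linj by metis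
  qed
  hence "nbr (KL L v) (L v a) = KL L v @ [L v a]" by (rule nbr_app)
  thus ?thesis using 1 by (simp add: KL_snoc)
qed

definition kk :: "'a list \<Rightarrow> 'a list" where "kk = restrict (KL L) TV"

lemma kk_TAut: "kk \<in> TAut"
  unfolding TAut_def
proof (intro CollectI conjI ballI)
  have "bij_betw (KL L) TV TV"
    unfolding bij_betw_def
  proof
    show "inj_on (KL L) TV" using KL_inj KL_length by (metis inj_onI)
    show "KL L ` TV = TV" using KL_TV KL_surj by blast
  qed
  hence "bij_betw kk TV TV" unfolding kk_def using bij_betw_cong[of TV "restrict (KL L) TV" "KL L"] by simp
  thus "kk \<in> Bij TV" unfolding Bij_def kk_def by simp
  fix u w :: "'a list" assume u: "u \<in> TV" and w: "w \<in> TV"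
  have ku: "kk u = KL L u" and kw: "kk w = KL L w" using u w by (simp_all add: kk_def)
  show "tadj (kk u) (kk w) = tadj u w"
  proof
    assume "tadj u w"
    then obtain a where a: "w = nbr u a" using tadj_nbr by metis
    hence "KL L w = nbr (KL L u) (L u a)" using KL_nbr u by metis
    thus "tadj (kk u) (kk w)" using ku kw u w KL_TV tadj_nbr by metis
  next
    assume "tadj (kk u) (kk w)"
    then obtain b where b: "KL L w = nbr (KL L u) b" using tadj_nbr ku kw by metis
    obtain a where a: "L u a = b" using Lbij bij_pointE by metis
    have "KL L (nbr u a) = KL L w" using KL_nbr[OF u] a b by simp
    moreover have "length (nbr u a) = length w"
      using calculation KL_length by metis
    ultimately have "nbr u a = w" using KL_inj by blast
    thus "tadj u w" using u w tadj_nbr by metis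
  qed
qed

lemma kk_locperm: assumes "v \<in> TV" shows "locperm kk v = L v"
proof
  fix a
  have "kk v = KL L v" "kk (nbr v a) = KL L (nbr v a)" using assms by (simp_all add: kk_def nbr_TV)
  thus "locperm kk v a = L v a" unfolding locperm_def using KL_nbr[OF assms] ecol_nbr by simp
qed

lemma kk_Nil: "kk [] = []" by (simp add: kk_def KL_Nil TV_Nil)

end



fun LR :: "('a \<Rightarrow> 'a) set \<Rightarrow> ('a \<Rightarrow> 'a) \<Rightarrow> 'a list \<Rightarrow> 'a \<Rightarrow> 'a" where
  "LR F s [] = s"
| "LR F s (c # r) = (SOME f. f \<in> F \<and> f c = LR F s r c)"

definition Lab :: "('a \<Rightarrow> 'a) set \<Rightarrow> ('a \<Rightarrow> 'a) \<Rightarrow> 'a list \<Rightarrow> 'a \<Rightarrow> 'a" where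
  "Lab F s v = LR F s (rev v)"

lemma Lab_Nil: "Lab F s [] = s" by (simp add: Lab_def)

lemma Lab_snoc: assumes "transitive_on_Omega F"
  shows "Lab F s (v @ [c]) \<in> F \<and> Lab F s (v @ [c]) c = Lab F s v c"
proof -
  have "\<exists>f. f \<in> F \<and> f c = Lab F s v c" using assms unfolding transitive_on_Omega_def by blast
  hence "(SOME f. f \<in> F \<and> f c = Lab F s v c) \<in> F \<and> (SOME f. f \<in> F \<and> f c = Lab F s v c) c = Lab F s v c"
    by (rule someI_ex)
  thus ?thesis by (simp add: Lab_def)
qed

lemma Lab_lab:
  fixes F :: "('a::finite \<Rightarrow> 'a) set"
  assumes "transitive_on_Omega F" "subgroup F (BijGroup UNIV)" "bij s"
  shows "lab (Lab F s)"
proof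
  fix v :: "'a list"
  show "bij (Lab F s v)"
  proof (cases "v = []")
    case True thus ?thesis using assms by (simp add: Lab_Nil)
  next
    case False
    then obtain w c where "v = w @ [c]" by (metis append_butlast_last_id)
    thus ?thesis using Lab_snoc[OF assms(1)] sub_bij[OF assms(2)] by metis
  qed
next
  fix v :: "'a list" and c
  show "Lab F s (v @ [c]) c = Lab F s v c" using Lab_snoc[OF assms(1)] by blast
qed

definition mk :: "('a \<Rightarrow> 'a) set \<Rightarrow> ('a \<Rightarrow> 'a) \<Rightarrow> 'a list \<Rightarrow> 'a list" where
  "mk F s = restrict (KL (Lab F s)) TV"

lemma mk_props:
  fixes F :: "('a::finite \<Rightarrow> 'a) set"
  assumes "transitive_on_Omega F" "subgroup F (BijGroup UNIV)" "bij s"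
  shows "mk F s \<in> TAut" "mk F s [] = []" "locperm (mk F s) [] = s"
    "\<And>v. v \<in> TV \<Longrightarrow> v \<noteq> [] \<Longrightarrow> locperm (mk F s) v \<in> F"
proof -
  interpret lab "Lab F s" using Lab_lab[OF assms] .
  have e: "mk F s = kk" unfolding mk_def kk_def by simp
  show "mk F s \<in> TAut" using e kk_TAut by simp
  show "mk F s [] = []" using e kk_Nil by simp
  show "locperm (mk F s) [] = s" using e kk_locperm TV_Nil Lab_Nil by metis
  fix v :: "'a list" assume v: "v \<in> TV" "v \<noteq> []"
  then obtain w c where "v = w @ [c]" by (metis append_butlast_last_id)
  thus "locperm (mk F s) v \<in> F" using e kk_locperm[OF v(1)] Lab_snoc[OF assms(1)] by metis
qed

lemma mk_GFF:
  fixes F F' :: "('a::finite \<Rightarrow> 'a) set"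
  assumes "transitive_on_Omega F" "subgroup F (BijGroup UNIV)" "subgroup F' (BijGroup UNIV)"
    "F \<subseteq> F'" "s \<in> F'"
  shows "mk F s \<in> GFF F F'"
proof -
  have bs: "bij s" using sub_bij[OF assms(3,5)] .
  note P = mk_props[OF assms(1,2) bs]
  have "{v \<in> TV. locperm (mk F s) v \<notin> F} \<subseteq> {[]}" using P(4) by blast
  hence "finite {v \<in> TV. locperm (mk F s) v \<notin> F}" using finite_subset by blast
  moreover have "\<forall>v\<in>TV. locperm (mk F s) v \<in> F'"
  proof
    fix v :: "'a list" assume v: "v \<in> TV"
    show "locperm (mk F s) v \<in> F'"
      using P(3) P(4)[OF v] assms(4,5) by (cases "v = []") auto
  qed
  ultimately show ?thesis unfolding GFF_iff using P(1) by blast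
qed

definition flat :: "('a list \<Rightarrow> 'a list) \<Rightarrow> bool" where
  "flat t \<longleftrightarrow> (\<forall>w\<in>TV. locperm t w = id)"

lemma flat_exists:
  fixes F F' :: "('a::finite \<Rightarrow> 'a) set"
  assumes sF: "subgroup F (BijGroup UNIV)" and sF': "subgroup F' (BijGroup UNIV)"
  shows "v \<in> TV \<Longrightarrow> \<exists>t. t \<in> GFF F F' \<and> t [] = v \<and> flat t"
proof (induction v)
  case Nil
  have "(\<lambda>x\<in>TV. x) \<in> GFF F F'"
    using subgroup.one_closed[OF GFF_subgroup[OF sF sF']] Aut_one by metis
  moreover have "flat (\<lambda>x\<in>TV. x :: 'a list)" unfolding flat_def by (simp add: locperm_idTV)
  ultimately show ?case using TV_Nil by force
next
  case (Cons c r)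
  have r: "r \<in> TV" using Cons.prems by (cases r) (simp_all add: TV_iff)
  have hr: "r = [] \<or> hd r \<noteq> c" using Cons.prems by (cases r) (simp_all add: TV_iff, metis)
  obtain t where t: "t \<in> GFF F F'" "t [] = r" "flat t" using Cons.IH r by blast
  have tc: "tau c \<in> GFF F F'" using tau_GFF sub_id[OF sF] sub_id[OF sF'] by metis
  have tT: "t \<in> TAut" and cT: "tau c \<in> TAut" using t tc GFF_iff by blast+
  have "compose TV (tau c) t = tau c \<otimes>\<^bsub>AutGroup_T\<^esub> t" using Aut_mult[OF cT tT] by simp
  hence 1: "compose TV (tau c) t \<in> GFF F F'"
    using subgroup.m_closed[OF GFF_subgroup[OF sF sF'] tc t(1)] by simp
  have "compose TV (tau c) t [] = tau c r" using t(2) by (simp add: compose_def TV_Nil)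
  also have "\<dots> = taur c r" using r by (simp add: tau_TV)
  also have "\<dots> = c # r" unfolding taur_def using hr by (intro if_not_P) metis
  finally have 2: "compose TV (tau c) t [] = c # r" .
  have "flat (compose TV (tau c) t)" unfolding flat_def
  proof
    fix w :: "'a list" assume w: "w \<in> TV"
    show "locperm (compose TV (tau c) t) w = id"
      using locperm_compose[OF cT tT w] t(3) w tau_locperm TAut_TV[OF tT w] unfolding flat_def by simp
  qed
  thus ?case using 1 2 by blast
qed



interpretation Aut: group AutGroup_T by (rule group_Aut)

locale setting =
  fixes F F' :: "('a::finite \<Rightarrow> 'a) set"
  assumes sF: "subgroup F (BijGroup UNIV)" and sF': "subgroup F' (BijGroup UNIV)" and FF': "F \<subseteq> F'"
begin

abbreviation "G \<equiv> GFF F F'"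
abbreviation "Pl \<equiv> plus_sub (GFF F F')"

lemma G_sub: "subgroup G AutGroup_T" using GFF_subgroup[OF sF sF'] .

lemma G_TAut: "g \<in> G \<Longrightarrow> g \<in> TAut" using GFF_iff by blast

lemma Pl_G: "Pl \<subseteq> G" using plus_sub_sub[OF G_sub] .

lemma Pl_sub: "subgroup Pl AutGroup_T"
  using plus_subgroup subgroup.subset[OF G_sub] Aut_carrier by metis

lemma G_mult: "g \<in> G \<Longrightarrow> h \<in> G \<Longrightarrow> g \<otimes>\<^bsub>AutGroup_T\<^esub> h \<in> G"
  using subgroup.m_closed[OF G_sub] by blast

lemma G_inv: "g \<in> G \<Longrightarrow> inv\<^bsub>AutGroup_T\<^esub> g \<in> G"
  using subgroup.m_inv_closed[OF G_sub] by blast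

lemma G_carr: "g \<in> G \<Longrightarrow> g \<in> carrier AutGroup_T"
  using G_TAut Aut_carrier by blast

lemma EdgeGen_conj:
  assumes t: "t \<in> G" and h: "h \<in> EdgeGen G"
  shows "t \<otimes>\<^bsub>AutGroup_T\<^esub> h \<otimes>\<^bsub>AutGroup_T\<^esub> inv\<^bsub>AutGroup_T\<^esub> t \<in> EdgeGen G"
proof -
  obtain u w where hG: "h \<in> G" and uw: "tadj u w" "h u = u" "h w = w" using h EdgeGen_iff by metis
  have tT: "t \<in> TAut" and hT: "h \<in> TAut" using t hG G_TAut by blast+
  have u: "u \<in> TV" and w: "w \<in> TV" using uw(1) tadj_def by blast+
  let ?x = "t \<otimes>\<^bsub>AutGroup_T\<^esub> h \<otimes>\<^bsub>AutGroup_T\<^esub> inv\<^bsub>AutGroup_T\<^esub> t"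
  have xG: "?x \<in> G" using G_mult G_inv t hG by metis
  have xe: "?x = compose TV (compose TV t h) (tinv t)"
    using Aut_inv[OF tT] Aut_mult[OF tT hT] Aut_mult[OF compose_TAut[OF tT hT] tinv_TAut[OF tT]] by simp
  have fix1: "?x (t z) = t z" if "z \<in> TV" "h z = z" for z
  proof -
    have "?x (t z) = t (h (tinv t (t z)))" using xe TAut_TV[OF tT that(1)] tinv_TV[OF tT] TAut_TV[OF tT]
      by (simp add: compose_def that(1) tinv_TV[OF tT] TAut_TV[OF tT])
    thus ?thesis using tinv_left[OF tT that(1)] that(2) by simp
  qed
  have "tadj (t u) (t w)" using TAut_tadj[OF tT u w] uw(1) by simp
  thus ?thesis unfolding EdgeGen_iff using xG fix1[OF u uw(2)] fix1[OF w uw(3)] by blast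
qed

lemma EdgeGen_inv:
  assumes h: "h \<in> EdgeGen G"
  shows "inv\<^bsub>AutGroup_T\<^esub> h \<in> EdgeGen G"
proof -
  obtain u w where hG: "h \<in> G" and uw: "tadj u w" "h u = u" "h w = w" using h EdgeGen_iff by metis
  have hT: "h \<in> TAut" using hG G_TAut by blast
  have u: "u \<in> TV" and w: "w \<in> TV" using uw(1) tadj_def by blast+
  have "(inv\<^bsub>AutGroup_T\<^esub> h) u = u" "(inv\<^bsub>AutGroup_T\<^esub> h) w = w"
    using Aut_inv[OF hT] tinv_left[OF hT u] tinv_left[OF hT w] uw by simp_all
  thus ?thesis unfolding EdgeGen_iff using G_inv[OF hG] uw(1) by blast
qed

lemma Pl_conj:
  assumes t: "t \<in> G" and h: "h \<in> Pl"
  shows "t \<otimes>\<^bsub>AutGroup_T\<^esub> h \<otimes>\<^bsub>AutGroup_T\<^esub> inv\<^bsub>AutGroup_T\<^esub> t \<in> Pl"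
  using h unfolding plus_sub_EdgeGen
proof (induction h rule: generate.induct)
  case one
  have "t \<otimes>\<^bsub>AutGroup_T\<^esub> \<one>\<^bsub>AutGroup_T\<^esub> \<otimes>\<^bsub>AutGroup_T\<^esub> inv\<^bsub>AutGroup_T\<^esub> t = \<one>\<^bsub>AutGroup_T\<^esub>"
    using G_carr[OF t] by simp
  thus ?case by (simp add: generate.one)
next
  case (incl h)
  thus ?case using EdgeGen_conj[OF t] generate.incl by metis
next
  case (inv h)
  thus ?case using EdgeGen_conj[OF t EdgeGen_inv] generate.incl by metis
next
  case (eng h1 h2)
  have c: "h1 \<in> carrier AutGroup_T" "h2 \<in> carrier AutGroup_T"
    using eng.hyps Aut.generate_in_carrier[of "EdgeGen G"] G_carr EdgeGen_iff by blast+
  have tc: "t \<in> carrier AutGroup_T" using G_carr t by blast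
  have "t \<otimes>\<^bsub>AutGroup_T\<^esub> (h1 \<otimes>\<^bsub>AutGroup_T\<^esub> h2) \<otimes>\<^bsub>AutGroup_T\<^esub> inv\<^bsub>AutGroup_T\<^esub> t
     = (t \<otimes>\<^bsub>AutGroup_T\<^esub> h1 \<otimes>\<^bsub>AutGroup_T\<^esub> inv\<^bsub>AutGroup_T\<^esub> t) \<otimes>\<^bsub>AutGroup_T\<^esub> (t \<otimes>\<^bsub>AutGroup_T\<^esub> h2 \<otimes>\<^bsub>AutGroup_T\<^esub> inv\<^bsub>AutGroup_T\<^esub> t)"
    using c tc by (simp add: Aut.m_assoc Aut.inv_solve_left)
  thus ?case using eng.IH generate.eng by metis
qed

end



context setting begin

lemma Pl_carr: "h \<in> Pl \<Longrightarrow> h \<in> carrier AutGroup_T" using Pl_G G_carr by blast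

lemma EdgeGen_Pl: "h \<in> EdgeGen G \<Longrightarrow> h \<in> Pl"
  unfolding plus_sub_EdgeGen by (rule generate.incl)

lemma nbr_Nil: "nbr [] x = [x]" by (simp add: nbr_def)

lemma stab_gen:
  assumes tr: "transitive_on_Omega F" and s: "s \<in> F'" and sx: "s x = x"
  shows "mk F s \<in> Pl \<and> mk F s \<in> G \<and> mk F s [] = [] \<and> locperm (mk F s) [] = s"
proof -
  have bs: "bij s" using sub_bij[OF sF' s] .
  note P = mk_props[OF tr sF bs]
  have kG: "mk F s \<in> G" using mk_GFF[OF tr sF sF' FF' s] .
  have "mk F s (nbr [] x) = nbr (mk F s []) (locperm (mk F s) [] x)"
    using TAut_nbr[OF P(1) TV_Nil] .
  hence "mk F s [x] = [x]" using P(2,3) sx by (simp add: nbr_Nil)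
  moreover have "tadj [] [x]" using tadj_nbrI[OF TV_Nil, of x] by (simp add: nbr_Nil)
  ultimately have "mk F s \<in> EdgeGen G" unfolding EdgeGen_iff using kG P(2) by blast
  thus ?thesis using EdgeGen_Pl kG P(2,3) by blast
qed

lemma root_stab:
  assumes tr: "transitive_on_Omega F" and gp: "gen_by_point_stabilizers F'"
    and g: "g \<in> G" and g0: "g [] = []"
  shows "g \<in> Pl"
proof -
  have F'eq: "F' = generate (BijGroup UNIV) (\<Union>x. {f \<in> F'. f x = x})"
    using gp unfolding gen_by_point_stabilizers_def .
  have key: "\<exists>k. k \<in> Pl \<and> k \<in> G \<and> k [] = [] \<and> locperm k [] = s"
    if "s \<in> generate (BijGroup UNIV) (\<Union>x. {f \<in> F'. f x = x})" for s
    using that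
  proof (induction s rule: generate.induct)
    case one
    have "\<one>\<^bsub>AutGroup_T\<^esub> \<in> Pl" unfolding plus_sub_EdgeGen by (rule generate.one)
    moreover have "\<one>\<^bsub>AutGroup_T\<^esub> \<in> G" using subgroup.one_closed[OF G_sub] .
    moreover have "\<one>\<^bsub>AutGroup_T\<^esub> [] = ([] :: 'a list)" by (simp add: Aut_one TV_Nil)
    moreover have "locperm (\<one>\<^bsub>AutGroup_T\<^esub>) ([] :: 'a list) = \<one>\<^bsub>BijGroup (UNIV :: 'a set)\<^esub>"
      by (simp add: Aut_one SymOmega_one locperm_idTV TV_Nil)
    ultimately show ?case by blast
  next
    case (incl h)
    then obtain x where "h \<in> F'" "h x = x" by blast
    thus ?case using stab_gen[OF tr] by blast
  next
    case (inv h)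
    then obtain x where h: "h \<in> F'" "h x = x" by blast
    have bh: "bij h" using sub_bij[OF sF' h(1)] .
    have "inv\<^bsub>BijGroup (UNIV :: 'a set)\<^esub> h = inv_into UNIV h" using SymOmega_inv[OF bh] .
    moreover have "inv_into UNIV h \<in> F'" using sub_inv[OF sF' h(1)] .
    moreover have "inv_into UNIV h x = x" using h(2) bh by (metis bij_is_inj inv_into_f_f UNIV_I)
    ultimately show ?case using stab_gen[OF tr] by metis
  next
    case (eng h1 h2)
    obtain k1 where k1: "k1 \<in> Pl" "k1 \<in> G" "k1 [] = []" "locperm k1 [] = h1" using eng.IH(1) by blast
    obtain k2 where k2: "k2 \<in> Pl" "k2 \<in> G" "k2 [] = []" "locperm k2 [] = h2" using eng.IH(2) by blast
    have "h1 \<in> F'" "h2 \<in> F'" by (subst F'eq, rule eng.hyps)+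
    hence b1: "bij h1" and b2: "bij h2" using sub_bij[OF sF'] by blast+
    have T1: "k1 \<in> TAut" and T2: "k2 \<in> TAut" using k1 k2 G_TAut by blast+
    have e: "k1 \<otimes>\<^bsub>AutGroup_T\<^esub> k2 = compose TV k1 k2" using Aut_mult[OF T1 T2] .
    have "k1 \<otimes>\<^bsub>AutGroup_T\<^esub> k2 \<in> Pl" using subgroup.m_closed[OF Pl_sub k1(1) k2(1)] .
    moreover have "k1 \<otimes>\<^bsub>AutGroup_T\<^esub> k2 \<in> G" using G_mult k1(2) k2(2) by blast
    moreover have "(k1 \<otimes>\<^bsub>AutGroup_T\<^esub> k2) [] = []" using e k1(3) k2(3) by (simp add: compose_def TV_Nil)
    moreover have "locperm (k1 \<otimes>\<^bsub>AutGroup_T\<^esub> k2) [] = h1 \<otimes>\<^bsub>BijGroup (UNIV :: 'a set)\<^esub> h2"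
      using e locperm_compose[OF T1 T2 TV_Nil] k1(4) k2(4) k2(3) SymOmega_mult[OF b1 b2] by simp
    ultimately show ?case by blast
  qed
  have gT: "g \<in> TAut" using g G_TAut by blast
  have "locperm g [] \<in> F'" using g TV_Nil GFF_iff by blast
  hence "locperm g [] \<in> generate (BijGroup UNIV) (\<Union>x. {f \<in> F'. f x = x})" using F'eq by simp
  then obtain k where k: "k \<in> Pl" "k \<in> G" "k [] = []" "locperm k [] = locperm g []"
    using key by blast
  have kT: "k \<in> TAut" using k G_TAut by blast
  let ?g' = "inv\<^bsub>AutGroup_T\<^esub> k \<otimes>\<^bsub>AutGroup_T\<^esub> g"
  have e: "?g' = compose TV (tinv k) g" using Aut_inv[OF kT] Aut_mult[OF tinv_TAut[OF kT] gT] by simp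
  have g'G: "?g' \<in> G" using G_mult G_inv k(2) g by blast
  have g'0: "?g' [] = []" using e g0 tinv_left[OF kT TV_Nil] k(3) by (simp add: compose_def TV_Nil)
  have "locperm ?g' [] = locperm (tinv k) [] \<circ> locperm g []"
    using e locperm_compose[OF tinv_TAut[OF kT] gT TV_Nil] g0 by simp
  also have "\<dots> = inv_into UNIV (locperm k []) \<circ> locperm k []"
    using locperm_tinv[OF kT TV_Nil] tinv_left[OF kT TV_Nil] k(3,4) by simp
  also have "\<dots> = id" using locperm_bij[OF kT TV_Nil] by (simp add: bij_is_inj)
  finally have lp: "locperm ?g' [] = id" .
  have g'T: "?g' \<in> TAut" using g'G G_TAut by blast
  define x :: 'a where "x = undefined"
  have fx: "?g' (nbr [] x) = nbr [] x" using TAut_nbr[OF g'T TV_Nil, of x] g'0 lp by simp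
  have "tadj [] (nbr [] x)" using tadj_nbrI[OF TV_Nil] .
  hence "?g' \<in> G \<and> (\<exists>u w. tadj u w \<and> ?g' u = u \<and> ?g' w = w)" using g'G g'0 fx by metis
  hence "?g' \<in> EdgeGen G" unfolding EdgeGen_iff .
  hence "?g' \<in> Pl" by (rule EdgeGen_Pl)
  hence "k \<otimes>\<^bsub>AutGroup_T\<^esub> ?g' \<in> Pl" using subgroup.m_closed[OF Pl_sub k(1)] by blast
  moreover have "k \<otimes>\<^bsub>AutGroup_T\<^esub> ?g' = g"
  proof -
    have kc: "k \<in> carrier AutGroup_T" and gc: "g \<in> carrier AutGroup_T" using G_carr k(2) g by blast+
    show ?thesis by (metis Aut.inv_closed Aut.m_assoc Aut.r_inv Aut.l_one kc gc)
  qed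
  ultimately show ?thesis by simp
qed

end



lemma par_fix:
  assumes g: "g \<in> TAut" and u: "u \<in> TV" and gu: "g u = u" and v: "v \<in> TV"
  shows "even (length (g v)) = even (length v)"
proof (rule TV_connect[OF u, where Q = "\<lambda>v. even (length (g v)) = even (length v)"])
  show "even (length (g u)) = even (length u)" using gu by simp
  fix v a assume v: "v \<in> TV" and "even (length (g v)) = even (length v)"
  thus "even (length (g (nbr v a))) = even (length (nbr v a))"
    using TAut_nbr[OF g v] parity_nbr by metis
qed (rule v)

lemma par_flip:
  assumes g: "g \<in> TAut" and o: "odd (length (g []))" and v: "v \<in> TV"
  shows "even (length (g v)) \<noteq> even (length v)"
proof (rule TV_connect[OF TV_Nil, where Q = "\<lambda>v. even (length (g v)) \<noteq> even (length v)"])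
  show "even (length (g [])) \<noteq> even (length ([] :: 'a list))" using o by simp
  fix v :: "'a list" and a assume v: "v \<in> TV" and "even (length (g v)) \<noteq> even (length v)"
  thus "even (length (g (nbr v a))) \<noteq> even (length (nbr v a))"
    using TAut_nbr[OF g v] parity_nbr by metis
qed (rule v)

context setting begin

lemma Aut_conj_back:
  assumes "t \<in> carrier AutGroup_T" "g \<in> carrier AutGroup_T"
  shows "t \<otimes>\<^bsub>AutGroup_T\<^esub> (inv\<^bsub>AutGroup_T\<^esub> t \<otimes>\<^bsub>AutGroup_T\<^esub> g \<otimes>\<^bsub>AutGroup_T\<^esub> t) \<otimes>\<^bsub>AutGroup_T\<^esub> inv\<^bsub>AutGroup_T\<^esub> t = g"
proof -
  have it: "inv\<^bsub>AutGroup_T\<^esub> t \<in> carrier AutGroup_T" using assms by simp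
  have a: "t \<otimes>\<^bsub>AutGroup_T\<^esub> (inv\<^bsub>AutGroup_T\<^esub> t \<otimes>\<^bsub>AutGroup_T\<^esub> g) = g"
    by (metis Aut.inv_closed Aut.m_assoc Aut.r_inv Aut.l_one assms)
  have "t \<otimes>\<^bsub>AutGroup_T\<^esub> (inv\<^bsub>AutGroup_T\<^esub> t \<otimes>\<^bsub>AutGroup_T\<^esub> g \<otimes>\<^bsub>AutGroup_T\<^esub> t)
      = (t \<otimes>\<^bsub>AutGroup_T\<^esub> (inv\<^bsub>AutGroup_T\<^esub> t \<otimes>\<^bsub>AutGroup_T\<^esub> g)) \<otimes>\<^bsub>AutGroup_T\<^esub> t"
    using assms it by (simp add: Aut.m_assoc)
  also have "\<dots> = g \<otimes>\<^bsub>AutGroup_T\<^esub> t" using a by simp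
  finally have b: "t \<otimes>\<^bsub>AutGroup_T\<^esub> (inv\<^bsub>AutGroup_T\<^esub> t \<otimes>\<^bsub>AutGroup_T\<^esub> g \<otimes>\<^bsub>AutGroup_T\<^esub> t) = g \<otimes>\<^bsub>AutGroup_T\<^esub> t" .
  have "g \<otimes>\<^bsub>AutGroup_T\<^esub> t \<otimes>\<^bsub>AutGroup_T\<^esub> inv\<^bsub>AutGroup_T\<^esub> t = g"
    by (metis Aut.inv_closed Aut.m_assoc Aut.r_inv Aut.r_one assms)
  thus ?thesis using b by simp
qed

lemma stab_plus:
  assumes tr: "transitive_on_Omega F" and gp: "gen_by_point_stabilizers F'"
    and g: "g \<in> G" and u: "u \<in> TV" and gu: "g u = u"
  shows "g \<in> Pl"
proof -
  obtain t where t: "t \<in> G" "t [] = u" "flat t" using flat_exists[OF sF sF' u] by blast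
  have tT: "t \<in> TAut" and gT: "g \<in> TAut" using t g G_TAut by blast+
  let ?g' = "inv\<^bsub>AutGroup_T\<^esub> t \<otimes>\<^bsub>AutGroup_T\<^esub> g \<otimes>\<^bsub>AutGroup_T\<^esub> t"
  have e: "?g' = compose TV (compose TV (tinv t) g) t"
    using Aut_inv[OF tT] Aut_mult[OF tinv_TAut[OF tT] gT] Aut_mult[OF compose_TAut[OF tinv_TAut[OF tT] gT] tT]
    by simp
  have "?g' [] = tinv t (g (t []))" using e TAut_TV[OF tT TV_Nil] TAut_TV[OF gT] by (simp add: compose_def TV_Nil)
  also have "\<dots> = []" using t(2) gu tinv_left[OF tT TV_Nil] by simp
  finally have g'0: "?g' [] = []" .
  have g'G: "?g' \<in> G" using G_mult G_inv t(1) g by blast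
  have "?g' \<in> Pl" using root_stab[OF tr gp g'G g'0] .
  hence "t \<otimes>\<^bsub>AutGroup_T\<^esub> ?g' \<otimes>\<^bsub>AutGroup_T\<^esub> inv\<^bsub>AutGroup_T\<^esub> t \<in> Pl" using Pl_conj[OF t(1)] by blast
  thus ?thesis using Aut_conj_back[OF G_carr[OF t(1)] G_carr[OF g]] by simp
qed

lemma move_elem:
  assumes tr: "transitive_on_Omega F" and u: "u \<in> TV"
  shows "\<exists>h\<in>G. h u = u \<and> h (nbr u e) = nbr u c"
proof -
  obtain t where t: "t \<in> G" "t [] = u" "flat t" using flat_exists[OF sF sF' u] by blast
  obtain f where f: "f \<in> F" "f e = c" using tr unfolding transitive_on_Omega_def by blast
  have fF': "f \<in> F'" using f FF' by blast
  have bf: "bij f" using sub_bij[OF sF f(1)] .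
  note P = mk_props[OF tr sF bf]
  have mG: "mk F f \<in> G" using mk_GFF[OF tr sF sF' FF' fF'] .
  have tT: "t \<in> TAut" and mT: "mk F f \<in> TAut" using t mG G_TAut by blast+
  let ?h = "t \<otimes>\<^bsub>AutGroup_T\<^esub> mk F f \<otimes>\<^bsub>AutGroup_T\<^esub> inv\<^bsub>AutGroup_T\<^esub> t"
  have e: "?h = compose TV (compose TV t (mk F f)) (tinv t)"
    using Aut_inv[OF tT] Aut_mult[OF tT mT] Aut_mult[OF compose_TAut[OF tT mT] tinv_TAut[OF tT]] by simp
  have hG: "?h \<in> G" using G_mult G_inv t(1) mG by blast
  have hT: "?h \<in> TAut" using hG G_TAut by blast
  have ti: "tinv t u = []" using tinv_left[OF tT TV_Nil] t(2) by simp
  have hu: "?h u = u" using e u ti P(2) t(2) by (simp add: compose_def TV_Nil)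
  have "locperm ?h u = locperm (compose TV t (mk F f)) (tinv t u) \<circ> locperm (tinv t) u"
    using e locperm_compose[OF compose_TAut[OF tT mT] tinv_TAut[OF tT] u] by simp
  also have "\<dots> = (locperm t (mk F f []) \<circ> locperm (mk F f) []) \<circ> inv_into UNIV (locperm t (tinv t u))"
    using ti locperm_compose[OF tT mT TV_Nil] locperm_tinv[OF tT u] by simp
  also have "\<dots> = f"
  proof -
    have l0: "locperm t [] = id" using t(3) unfolding flat_def by (simp add: TV_Nil)
    show ?thesis unfolding ti P(2) P(3) l0 by (simp add: inv_id)
  qed
  finally have lh: "locperm ?h u = f" .
  have "?h (nbr u e) = nbr u c" using TAut_nbr[OF hT u, of e] hu lh f(2) by simp
  thus ?thesis using hG hu by blast
qed

lemma even_plus: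
  assumes tr: "transitive_on_Omega F" and gp: "gen_by_point_stabilizers F'"
  shows "g \<in> G \<Longrightarrow> even (length (g [])) \<Longrightarrow> g \<in> Pl"
proof (induction "length (g [])" arbitrary: g rule: less_induct)
  case less
  have gT: "g \<in> TAut" using less.prems G_TAut by blast
  show ?case
  proof (cases "g [] = []")
    case True thus ?thesis using root_stab[OF tr gp less.prems(1)] by simp
  next
    case False
    define v where "v = g []"
    have vTV: "v \<in> TV" using v_def TAut_TV[OF gT TV_Nil] by simp
    have len: "length v \<ge> 2" using False less.prems(2) v_def
      by (metis One_nat_def length_0_conv less_2_cases not_le odd_one)
    obtain u e where ue: "v = u @ [e]" using len by (metis append_butlast_last_id length_0_conv not_numeral_le_zero)
    have ulen: "length u \<ge> 1" using ue len by simp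
    obtain x c where xc: "u = x @ [c]" using ulen by (metis append_butlast_last_id length_0_conv not_one_le_zero)
    have uTV: "u \<in> TV" and lu: "u = [] \<or> last u \<noteq> e" using vTV ue by (simp_all add: TV_snoc)
    have nv: "nbr u e = v" using ue lu by (simp add: nbr_app)
    have nx: "nbr u c = x" using xc by (simp add: nbr_snoc)
    obtain h where h: "h \<in> G" "h u = u" "h (nbr u e) = nbr u c" using move_elem[OF tr uTV] by blast
    have hP: "h \<in> Pl" using stab_plus[OF tr gp h(1) uTV h(2)] .
    have hT: "h \<in> TAut" using h(1) G_TAut by blast
    let ?g2 = "h \<otimes>\<^bsub>AutGroup_T\<^esub> g"
    have g2G: "?g2 \<in> G" using G_mult h(1) less.prems(1) by blast
    have "?g2 [] = h v" using Aut_mult[OF hT gT] v_def by (simp add: compose_def TV_Nil)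
    hence g20: "?g2 [] = x" using h(3) nv nx by simp
    have "length x + 2 = length v" using ue xc by simp
    hence lt: "length (?g2 []) < length (g [])" using g20 v_def by simp
    have "even (length x + 2)" using \<open>length x + 2 = length v\<close> v_def less.prems(2) by simp
    hence "even (length (?g2 []))" using g20 by simp
    note lt this
    hence "?g2 \<in> Pl" using less.hyps g2G by blast
    hence "inv\<^bsub>AutGroup_T\<^esub> h \<otimes>\<^bsub>AutGroup_T\<^esub> ?g2 \<in> Pl"
      using subgroup.m_closed[OF Pl_sub] subgroup.m_inv_closed[OF Pl_sub hP] by blast
    moreover have "inv\<^bsub>AutGroup_T\<^esub> h \<otimes>\<^bsub>AutGroup_T\<^esub> ?g2 = g"
    proof -
      have hc: "h \<in> carrier AutGroup_T" and gc: "g \<in> carrier AutGroup_T" using G_carr h(1) less.prems(1) by blast+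
      show ?thesis by (metis Aut.inv_closed Aut.m_assoc Aut.l_inv Aut.l_one hc gc)
    qed
    ultimately show ?thesis by simp
  qed
qed

end



lemma rc_eq: "rcosets\<^bsub>GFF_group F F'\<^esub> H = (\<lambda>a. H #>\<^bsub>AutGroup_T\<^esub> a) ` GFF F F'"
  unfolding RCOSETS_def GFF_group_def by auto

context setting begin

lemma Pl_parity: "h \<in> Pl \<Longrightarrow> \<forall>v\<in>TV. even (length (h v)) = even (length v)"
  unfolding plus_sub_EdgeGen
proof (induction h rule: generate.induct)
  case one thus ?case by (simp add: Aut_one)
next
  case (incl h)
  then obtain u w where hG: "h \<in> G" and uw: "tadj u w" "h u = u" using EdgeGen_iff by metis
  thus ?case using par_fix[OF G_TAut[OF hG]] tadj_def by metis
next
  case (inv h)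
  hence "inv\<^bsub>AutGroup_T\<^esub> h \<in> EdgeGen G" using EdgeGen_inv by blast
  then obtain u w where hG: "inv\<^bsub>AutGroup_T\<^esub> h \<in> G" and uw: "tadj u w" "(inv\<^bsub>AutGroup_T\<^esub> h) u = u"
    using EdgeGen_iff by metis
  thus ?case using par_fix[OF G_TAut[OF hG]] tadj_def by metis
next
  case (eng h1 h2)
  have c: "h1 \<in> TAut" "h2 \<in> TAut"
    using eng.hyps Aut.generate_in_carrier[of "EdgeGen G"] G_carr EdgeGen_iff Aut_carrier by blast+
  show ?case
  proof
    fix v :: "'a list" assume v: "v \<in> TV"
    have "(h1 \<otimes>\<^bsub>AutGroup_T\<^esub> h2) v = h1 (h2 v)" using Aut_mult[OF c] v by (simp add: compose_def)
    thus "even (length ((h1 \<otimes>\<^bsub>AutGroup_T\<^esub> h2) v)) = even (length v)"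
      using eng.IH v TAut_TV[OF c(2) v] by simp
  qed
qed

lemma Pl_star:
  assumes tr: "transitive_on_Omega F" and gp: "gen_by_point_stabilizers F'"
  shows "Pl = star_sub G"
proof
  show "Pl \<subseteq> star_sub G" unfolding star_sub_def using Pl_G Pl_parity by blast
  show "star_sub G \<subseteq> Pl"
  proof
    fix g assume "g \<in> star_sub G"
    hence g: "g \<in> G" and "even (length (g [])) = even (length ([] :: 'a list))"
      unfolding star_sub_def using TV_Nil by blast+
    hence "even (length (g []))" by simp
    thus "g \<in> Pl" using even_plus[OF tr gp g] by blast
  qed
qed

lemma index_two:
  assumes tr: "transitive_on_Omega F" and gp: "gen_by_point_stabilizers F'"
  shows "card (rcosets\<^bsub>GFF_group F F'\<^esub> Pl) = 2"
proof -
  define a :: 'a where "a = undefined"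
  let ?t = "tau a"
  have tG: "?t \<in> G" using tau_GFF sub_id[OF sF] sub_id[OF sF'] by metis
  have tT: "?t \<in> TAut" by (rule tau_TAut)
  have tt: "?t \<otimes>\<^bsub>AutGroup_T\<^esub> ?t = \<one>\<^bsub>AutGroup_T\<^esub>"
    unfolding Aut_mult[OF tT tT] Aut_one by (auto simp: compose_def fun_eq_iff tau_tau)
  have tnP: "?t \<notin> Pl"
  proof
    assume "?t \<in> Pl"
    hence "even (length (?t [])) = even (length ([] :: 'a list))" using Pl_parity TV_Nil by blast
    thus False by (simp add: tau_Nil)
  qed
  have PlC: "Pl \<subseteq> carrier AutGroup_T" using Pl_G G_carr by blast
  have "rcosets\<^bsub>GFF_group F F'\<^esub> Pl = {Pl, Pl #>\<^bsub>AutGroup_T\<^esub> ?t}"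
  proof
    show "rcosets\<^bsub>GFF_group F F'\<^esub> Pl \<subseteq> {Pl, Pl #>\<^bsub>AutGroup_T\<^esub> ?t}"
    proof
      fix C assume "C \<in> rcosets\<^bsub>GFF_group F F'\<^esub> Pl"
      then obtain g where g: "g \<in> G" and C: "C = Pl #>\<^bsub>AutGroup_T\<^esub> g" unfolding rc_eq by blast
      have gT: "g \<in> TAut" using g G_TAut by blast
      show "C \<in> {Pl, Pl #>\<^bsub>AutGroup_T\<^esub> ?t}"
      proof (cases "even (length (g []))")
        case True
        hence "g \<in> Pl" using even_plus[OF tr gp g] by blast
        hence "C = Pl" using C Aut.coset_join2[OF G_carr[OF g] Pl_sub] by simp
        thus ?thesis by simp
      next
        case False
        let ?g2 = "g \<otimes>\<^bsub>AutGroup_T\<^esub> ?t"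
        have g2G: "?g2 \<in> G" using G_mult g tG by blast
        have "?g2 [] = g [a]" using Aut_mult[OF gT tT] by (simp add: compose_def TV_Nil tau_Nil)
        moreover have "[a] \<in> TV" by (simp add: TV_iff)
        ultimately have "even (length (?g2 []))" using par_flip[OF gT False] by simp
        hence g2P: "?g2 \<in> Pl" using even_plus[OF tr gp g2G] by blast
        have "?g2 \<otimes>\<^bsub>AutGroup_T\<^esub> ?t = g"
          using tt G_carr[OF g] G_carr[OF tG] by (simp add: Aut.m_assoc)
        hence "g \<in> Pl #>\<^bsub>AutGroup_T\<^esub> ?t" using Aut.rcosI[OF g2P PlC G_carr[OF tG]] by simp
        hence "Pl #>\<^bsub>AutGroup_T\<^esub> ?t = Pl #>\<^bsub>AutGroup_T\<^esub> g"
          using Aut.repr_independence[OF _ G_carr[OF tG] Pl_sub] by blast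
        thus ?thesis using C by simp
      qed
    qed
    have "Pl = Pl #>\<^bsub>AutGroup_T\<^esub> \<one>\<^bsub>AutGroup_T\<^esub>" using Aut.coset_mult_one[OF PlC] by simp
    moreover have "\<one>\<^bsub>AutGroup_T\<^esub> \<in> G" using subgroup.one_closed[OF G_sub] .
    ultimately have "Pl \<in> rcosets\<^bsub>GFF_group F F'\<^esub> Pl" unfolding rc_eq by blast
    moreover have "Pl #>\<^bsub>AutGroup_T\<^esub> ?t \<in> rcosets\<^bsub>GFF_group F F'\<^esub> Pl" unfolding rc_eq using tG by blast
    ultimately show "{Pl, Pl #>\<^bsub>AutGroup_T\<^esub> ?t} \<subseteq> rcosets\<^bsub>GFF_group F F'\<^esub> Pl" by blast
  qed
  moreover have "Pl \<noteq> Pl #>\<^bsub>AutGroup_T\<^esub> ?t"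
    using Aut.rcos_self[OF G_carr[OF tG] Pl_sub] tnP by blast
  ultimately show ?thesis by simp
qed

end



interpretation Sym: group "BijGroup (UNIV :: 'a set)" by (rule group_BijGroup)

context setting begin

definition PS :: "('a \<Rightarrow> 'a) set" where
  "PS = generate (BijGroup UNIV) (\<Union>x. {f \<in> F'. f x = x})"

lemma gens_carr: "(\<Union>x. {f \<in> F'. f x = x}) \<subseteq> carrier (BijGroup UNIV)"
  using subgroup.subset[OF sF'] by blast

lemma PS_sub: "subgroup PS (BijGroup UNIV)"
  unfolding PS_def using Sym.generate_is_subgroup[OF gens_carr] .

lemma PS_F': "PS \<subseteq> F'"
  unfolding PS_def by (rule Sym.generate_subgroup_incl[OF _ sF']) blast

lemma PS_stab: "f \<in> F' \<Longrightarrow> f x = x \<Longrightarrow> f \<in> PS"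
  unfolding PS_def by (rule generate.incl) blast

lemma not_iii_intrans:
  assumes hat: "F' \<subseteq> hat F"
    and n: "\<not> (transitive_on_Omega F \<and> gen_by_point_stabilizers F')"
  shows "\<exists>a b. \<forall>p\<in>PS. p a \<noteq> b"
proof (cases "transitive_on_Omega F")
  case False
  then obtain x y where xy: "\<forall>f\<in>F. f x \<noteq> y" unfolding transitive_on_Omega_def by metis
  have "\<forall>p\<in>PS. p x \<noteq> y"
  proof
    fix p assume "p \<in> PS"
    hence p: "p \<in> hat F" using PS_F' hat by (meson subsetD)
    have xo: "x \<in> orbit_of F x" unfolding orbit_of_def using sub_id[OF sF] image_eqI[of x "\<lambda>f. f x" id F] by simp
    have "p ` orbit_of F x = orbit_of F x" using p unfolding hat_def by simp
    hence "p x \<in> orbit_of F x" using xo by (metis imageI)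
    then obtain f where "f \<in> F" "p x = f x" unfolding orbit_of_def by (metis imageE)
    thus "p x \<noteq> y" using xy by metis
  qed
  thus ?thesis by blast
next
  case True
  hence ng: "F' \<noteq> PS" using n unfolding gen_by_point_stabilizers_def PS_def by simp
  show ?thesis
  proof (rule ccontr)
    assume "\<not> (\<exists>a b. \<forall>p\<in>PS. p a \<noteq> b)"
    hence tr: "\<forall>a b. \<exists>p\<in>PS. p a = b" by metis
    have "F' \<subseteq> PS"
    proof
      fix f assume f: "f \<in> F'"
      define x :: 'a where "x = undefined"
      obtain p where p: "p \<in> PS" "p x = f x" using tr by metis
      have pF': "p \<in> F'" using p PS_F' by blast
      have bp: "bij p" using sub_bij[OF sF' pF'] .
      let ?q = "inv_into UNIV p \<circ> f"
      have qF': "?q \<in> F'" using sub_comp[OF sF' sub_inv[OF sF' pF'] f] .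
      have "?q x = inv_into UNIV p (p x)" using p(2) by simp
      also have "\<dots> = x" using inv_into_f_f[OF bij_is_inj[OF bp] UNIV_I] .
      finally have "?q x = x" .
      hence qP: "?q \<in> PS" using PS_stab qF' by blast
      have "p \<circ> ?q \<in> PS" using sub_comp[OF PS_sub p(1) qP] .
      moreover have "p \<circ> ?q = f"
      proof
        fix z show "(p \<circ> ?q) z = f z" using f_inv_into_f[of "f z" p UNIV] bij_is_surj[OF bp] by simp
      qed
      ultimately show "f \<in> PS" by simp
    qed
    thus False using ng PS_F' by (metis subset_antisym)
  qed
qed

lemma edge_stab_PS:
  assumes g: "g \<in> G" and uw: "tadj u w" "g u = u" "g w = w"
  shows "\<forall>v\<in>TV. locperm g v \<in> PS"
proof
  fix v :: "'a list" assume v: "v \<in> TV"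
  have gT: "g \<in> TAut" using g G_TAut by blast
  have u: "u \<in> TV" and w: "w \<in> TV" using uw(1) tadj_def by blast+
  have lF': "\<And>v. v \<in> TV \<Longrightarrow> locperm g v \<in> F'" using g GFF_iff by blast
  show "locperm g v \<in> PS"
  proof (rule TV_connect[OF u, where Q = "\<lambda>v. locperm g v \<in> PS"])
    let ?c = "ecol u w"
    have "locperm g u ?c = ecol (g u) (g (nbr u ?c))" unfolding locperm_def ..
    also have "\<dots> = ?c" using nbr_ecol[OF uw(1)] uw(2,3) by simp
    finally show "locperm g u \<in> PS" using PS_stab lF'[OF u] by blast
  next
    fix v :: "'a list" and c assume v: "v \<in> TV" and Qv: "locperm g v \<in> PS"
    let ?v' = "nbr v c"
    have v': "?v' \<in> TV" using nbr_TV[OF v] .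
    have "locperm g ?v' c = ecol (g ?v') (g v)" unfolding locperm_def using nbr_nbr[OF v] by simp
    also have "\<dots> = ecol (g v) (g ?v')"
      using ecol_sym TAut_tadj[OF gT v v'] tadj_nbrI[OF v] by metis
    also have "\<dots> = locperm g v c" unfolding locperm_def ..
    finally have eq: "locperm g ?v' c = locperm g v c" .
    have sF'v: "locperm g v \<in> F'" using lF'[OF v] .
    have bs: "bij (locperm g v)" using sub_bij[OF sF' sF'v] .
    let ?q = "inv_into UNIV (locperm g v) \<circ> locperm g ?v'"
    have qF': "?q \<in> F'" using sub_comp[OF sF' sub_inv[OF sF' sF'v] lF'[OF v']] .
    have "?q c = inv_into UNIV (locperm g v) (locperm g v c)" using eq by simp
    also have "\<dots> = c" using inv_into_f_f[OF bij_is_inj[OF bs] UNIV_I] .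
    finally have "?q c = c" .
    hence qP: "?q \<in> PS" using PS_stab qF' by blast
    have "locperm g v \<circ> ?q \<in> PS" using sub_comp[OF PS_sub Qv qP] .
    moreover have "locperm g v \<circ> ?q = locperm g ?v'"
    proof
      fix z show "(locperm g v \<circ> ?q) z = locperm g ?v' z"
        using f_inv_into_f[of "locperm g ?v' z" "locperm g v" UNIV] bij_is_surj[OF bs] by simp
    qed
    ultimately show "locperm g ?v' \<in> PS" by simp
  qed (rule v)
qed

end



definition mv :: "int \<Rightarrow> bool \<Rightarrow> int" where
  "mv n B = (if even n = B then n + 1 else n - 1)"

lemma mv_mv: "mv (mv n B) B = n"
  unfolding mv_def by (cases "even n = B") simp_all

definition piA :: "'a set \<Rightarrow> 'a list \<Rightarrow> int" where
  "piA A v = foldl (\<lambda>n c. mv n (c \<in> A)) 0 v"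

lemma piA_snoc: "piA A (v @ [c]) = mv (piA A v) (c \<in> A)"
  unfolding piA_def by simp

lemma piA_nbr: assumes "v \<in> TV" shows "piA A (nbr v c) = mv (piA A v) (c \<in> A)"
proof (cases "v \<noteq> [] \<and> last v = c")
  case True
  then obtain w where w: "v = w @ [c]" by (metis append_butlast_last_id)
  have "nbr v c = w" using w by (simp add: nbr_snoc)
  moreover have "piA A v = mv (piA A w) (c \<in> A)" using w by (simp add: piA_snoc)
  ultimately show ?thesis by (simp add: mv_mv)
next
  case False
  hence "v = [] \<or> last v \<noteq> c" by metis
  hence "nbr v c = v @ [c]" by (rule nbr_app)
  thus ?thesis by (simp add: piA_snoc)
qed

definition word :: "'a \<Rightarrow> 'a \<Rightarrow> nat \<Rightarrow> 'a list" where
  "word a b n = concat (replicate n [a, b])"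

lemma word_Suc: "word a b (Suc n) = a # b # word a b n"
  unfolding word_def by simp

lemma word_Suc': "word a b (Suc n) = word a b n @ [a, b]"
  unfolding word_def by (simp add: replicate_append_same[symmetric])

lemma word_props: assumes "a \<noteq> b" shows "word a b n \<in> TV \<and> (word a b n = [] \<or> hd (word a b n) = a)"
proof (induction n)
  case 0 thus ?case by (simp add: word_def TV_Nil)
next
  case (Suc n)
  have "successively (\<noteq>) (a # b # word a b n)"
    using Suc assms by (cases "word a b n") (auto simp: TV_iff)
  thus ?case by (simp add: word_Suc TV_iff)
qed

lemma piA_word: assumes "a \<in> A" "b \<notin> A" shows "piA A (word a b n) = 2 * int n"
proof (induction n)
  case 0 thus ?case by (simp add: word_def piA_def)
next
  case (Suc n)
  have "piA A (word a b (Suc n)) = piA A ((word a b n @ [a]) @ [b])" by (simp add: word_Suc')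
  also have "\<dots> = mv (mv (piA A (word a b n)) (a \<in> A)) (b \<in> A)" by (simp only: piA_snoc)
  also have "\<dots> = mv (mv (piA A (word a b n)) True) False" using assms by simp
  finally have "piA A (word a b (Suc n)) = mv (mv (piA A (word a b n)) True) False" .
  also have "\<dots> = 2 * int (Suc n)" using Suc by (simp add: mv_def)
  finally show ?case .
qed

primrec tn :: "'a \<Rightarrow> 'a \<Rightarrow> nat \<Rightarrow> 'a list \<Rightarrow> 'a list" where
  "tn a b 0 = (\<lambda>x\<in>TV. x)"
| "tn a b (Suc n) = compose TV (tau a) (compose TV (tau b) (tn a b n))"

lemma tn_TAut: "tn a b n \<in> TAut"
proof (induction n)
  case 0 show ?case unfolding tn.simps by (rule id_TAut)
next
  case (Suc n) thus ?case by (simp add: compose_TAut tau_TAut)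
qed

lemma tn_Nil: assumes "a \<noteq> b" shows "tn a b n [] = word a b n"
proof (induction n)
  case 0 thus ?case by (simp add: word_def TV_Nil)
next
  case (Suc n)
  have w: "word a b n \<in> TV" and h: "word a b n = [] \<or> hd (word a b n) = a" using word_props[OF assms] by blast+
  have "tn a b (Suc n) [] = tau a (tau b (word a b n))"
    using Suc TAut_TV[OF tn_TAut TV_Nil, of a b n] TAut_TV[OF tau_TAut]
    by (simp add: compose_def TV_Nil)
  also have "tau b (word a b n) = b # word a b n"
  proof -
    have "\<not> (word a b n \<noteq> [] \<and> hd (word a b n) = b)" using h assms by metis
    thus ?thesis unfolding tau_TV[OF w] taur_def by (rule if_not_P)
  qed
  also have "tau a (b # word a b n) = a # b # word a b n"
  proof -
    have "b # word a b n \<in> TV" using word_props[OF assms, of "Suc n"] word_Suc taur_TV w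
      by (metis list.distinct(1) list.sel(1) list.sel(3) taur_def)
    thus ?thesis using assms by (simp add: tau_TV taur_def)
  qed
  finally show ?case by (simp add: word_Suc)
qed

context setting begin

lemma tn_G: "tn a b n \<in> G"
proof (induction n)
  case 0 show ?case unfolding tn.simps Aut_one[symmetric] by (rule subgroup.one_closed[OF G_sub])
next
  case (Suc n)
  have ta: "tau a \<in> G" and tb: "tau b \<in> G" using tau_GFF sub_id[OF sF] sub_id[OF sF'] by metis+
  have "compose TV (tau b) (tn a b n) = tau b \<otimes>\<^bsub>AutGroup_T\<^esub> tn a b n"
    by (rule Aut_mult[OF tau_TAut tn_TAut, symmetric])
  hence 1: "compose TV (tau b) (tn a b n) \<in> G" using G_mult tb Suc by simp
  have "compose TV (tau a) (compose TV (tau b) (tn a b n)) = tau a \<otimes>\<^bsub>AutGroup_T\<^esub> compose TV (tau b) (tn a b n)"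
    by (rule Aut_mult[OF tau_TAut compose_TAut[OF tau_TAut tn_TAut], symmetric])
  thus ?case using G_mult ta 1 by simp
qed

lemma infinite_cosets:
  assumes ab: "\<forall>p\<in>PS. p a \<noteq> b"
  shows "infinite (rcosets\<^bsub>GFF_group F F'\<^esub> Pl)"
proof -
  define A where "A = orbit_of PS a"
  have idP: "id \<in> PS" using sub_id[OF PS_sub] .
  have aA: "a \<in> A" unfolding A_def orbit_of_def using idP image_eqI[of a "\<lambda>f. f a" id PS] by simp
  have bA: "b \<notin> A" unfolding A_def orbit_of_def using ab by auto
  have anb: "a \<noteq> b" using aA bA by metis
  have Ainv: "p c \<in> A \<longleftrightarrow> c \<in> A" if p: "p \<in> PS" for p c
  proof
    assume "c \<in> A"
    then obtain q where q: "q \<in> PS" "c = q a" unfolding A_def orbit_of_def by blast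
    have "p \<circ> q \<in> PS" using sub_comp[OF PS_sub p q(1)] .
    thus "p c \<in> A" unfolding A_def orbit_of_def using q(2) image_eqI[of "p c" "\<lambda>f. f a" "p \<circ> q" PS] by simp
  next
    assume "p c \<in> A"
    then obtain q where q: "q \<in> PS" "p c = q a" unfolding A_def orbit_of_def by blast
    have bp: "bij p" using sub_bij[OF PS_sub p] .
    have "inv_into UNIV p \<circ> q \<in> PS" using sub_comp[OF PS_sub sub_inv[OF PS_sub p] q(1)] .
    moreover have "(inv_into UNIV p \<circ> q) a = c" using q(2) inv_into_f_f[OF bij_is_inj[OF bp] UNIV_I, of c] by simp
    ultimately show "c \<in> A" unfolding A_def orbit_of_def by (metis imageI)
  qed
  have edge_pi: "\<forall>v\<in>TV. piA A (g v) = piA A v" if g: "g \<in> G" and uw: "tadj u w" "g u = u" "g w = w" for g u w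
  proof
    fix v :: "'a list" assume v: "v \<in> TV"
    have gT: "g \<in> TAut" using g G_TAut by blast
    have u: "u \<in> TV" using uw(1) tadj_def by blast
    have lP: "\<And>v. v \<in> TV \<Longrightarrow> locperm g v \<in> PS" using edge_stab_PS[OF g uw] by blast
    show "piA A (g v) = piA A v"
    proof (rule TV_connect[OF u, where Q = "\<lambda>v. piA A (g v) = piA A v"])
      show "piA A (g u) = piA A u" using uw(2) by simp
      fix v :: "'a list" and c assume v: "v \<in> TV" and Q: "piA A (g v) = piA A v"
      have "piA A (g (nbr v c)) = piA A (nbr (g v) (locperm g v c))" using TAut_nbr[OF gT v] by simp
      also have "\<dots> = mv (piA A (g v)) (locperm g v c \<in> A)" using piA_nbr[OF TAut_TV[OF gT v]] .
      also have "\<dots> = mv (piA A v) (c \<in> A)" using Q Ainv[OF lP[OF v]] by simp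
      also have "\<dots> = piA A (nbr v c)" using piA_nbr[OF v] by simp
      finally show "piA A (g (nbr v c)) = piA A (nbr v c)" .
    qed (rule v)
  qed
  have Pl_pi: "h \<in> Pl \<Longrightarrow> \<forall>v\<in>TV. piA A (h v) = piA A v" for h
    unfolding plus_sub_EdgeGen
  proof (induction h rule: generate.induct)
    case one thus ?case by (simp add: Aut_one)
  next
    case (incl h)
    then obtain u w where "h \<in> G" "tadj u w" "h u = u" "h w = w" using EdgeGen_iff by metis
    thus ?case using edge_pi by blast
  next
    case (inv h)
    hence "inv\<^bsub>AutGroup_T\<^esub> h \<in> EdgeGen G" using EdgeGen_inv by blast
    then obtain u w where "inv\<^bsub>AutGroup_T\<^esub> h \<in> G" "tadj u w" "(inv\<^bsub>AutGroup_T\<^esub> h) u = u" "(inv\<^bsub>AutGroup_T\<^esub> h) w = w"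
      using EdgeGen_iff by metis
    thus ?case using edge_pi by blast
  next
    case (eng h1 h2)
    have c: "h1 \<in> TAut" "h2 \<in> TAut"
      using eng.hyps Aut.generate_in_carrier[of "EdgeGen G"] G_carr EdgeGen_iff Aut_carrier by blast+
    show ?case
    proof
      fix v :: "'a list" assume v: "v \<in> TV"
      have "(h1 \<otimes>\<^bsub>AutGroup_T\<^esub> h2) v = h1 (h2 v)" using Aut_mult[OF c] v by (simp add: compose_def)
      thus "piA A ((h1 \<otimes>\<^bsub>AutGroup_T\<^esub> h2) v) = piA A v"
        using eng.IH v TAut_TV[OF c(2) v] by simp
    qed
  qed
  define f where "f n = Pl #>\<^bsub>AutGroup_T\<^esub> tn a b n" for n
  have PlC: "Pl \<subseteq> carrier AutGroup_T" using Pl_G G_carr by blast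
  have "inj f"
  proof (rule injI)
    fix m n assume "f m = f n"
    hence "tn a b n \<in> Pl #>\<^bsub>AutGroup_T\<^esub> tn a b m"
      using Aut.rcos_self[OF G_carr[OF tn_G] Pl_sub, of a b n] unfolding f_def by simp
    then obtain h where h: "h \<in> Pl" "tn a b n = h \<otimes>\<^bsub>AutGroup_T\<^esub> tn a b m" unfolding r_coset_def by blast
    have hT: "h \<in> TAut" using h(1) Pl_G G_TAut by blast
    have "tn a b n [] = h (tn a b m [])"
      using h(2) Aut_mult[OF hT tn_TAut] by (simp add: compose_def TV_Nil)
    moreover have "tn a b m [] \<in> TV" by (rule TAut_TV[OF tn_TAut TV_Nil])
    ultimately have "piA A (tn a b n []) = piA A (tn a b m [])"
      using bspec[OF Pl_pi[OF h(1)]] by simp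
    thus "m = n" using tn_Nil[OF anb] piA_word[OF aA bA] by simp
  qed
  hence "infinite (range f)" using finite_imageD infinite_UNIV_nat by blast
  moreover have "range f \<subseteq> rcosets\<^bsub>GFF_group F F'\<^esub> Pl" unfolding rc_eq f_def using tn_G by blast
  ultimately show ?thesis using finite_subset by blast
qed

end



theorem mainTheorem16:
  fixes F F' :: "('a::finite \<Rightarrow> 'a) set"
  assumes "card (UNIV :: 'a set) \<ge> 3"
    and "subgroup F SymOmega" and "subgroup F' SymOmega"
    and "F \<subseteq> F'" and "F' \<subseteq> hat F"
  shows "((card (rcosets\<^bsub>GFF_group F F'\<^esub> (plus_sub (GFF F F'))) = 2
            \<and> plus_sub (GFF F F') = star_sub (GFF F F'))
           \<longleftrightarrow> finite (rcosets\<^bsub>GFF_group F F'\<^esub> (plus_sub (GFF F F'))))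
       \<and> (finite (rcosets\<^bsub>GFF_group F F'\<^esub> (plus_sub (GFF F F')))
           \<longleftrightarrow> (transitive_on_Omega F \<and> gen_by_point_stabilizers F'))"
proof -
  interpret setting F F' by (rule setting.intro[OF assms(2,3,4)])
  have A: "card (rcosets\<^bsub>GFF_group F F'\<^esub> Pl) = 2 \<and> Pl = star_sub G"
    if "transitive_on_Omega F \<and> gen_by_point_stabilizers F'"
    using index_two Pl_star that by blast
  have B: "infinite (rcosets\<^bsub>GFF_group F F'\<^esub> Pl)"
    if n: "\<not> (transitive_on_Omega F \<and> gen_by_point_stabilizers F')"
  proof -
    obtain a b where "\<forall>p\<in>PS. p a \<noteq> b" using not_iii_intrans[OF assms(5) n] by blast
    thus ?thesis using infinite_cosets by blast
  qed
  have C: "finite (rcosets\<^bsub>GFF_group F F'\<^esub> Pl)" if "card (rcosets\<^bsub>GFF_group F F'\<^esub> Pl) = 2"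
    using that card.infinite by fastforce
  show ?thesis using A B C by metis
qed


end
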